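(* Let $(L,R)$, $(\beta_{j,n})$, $(\nu_t)$ be as in the context and let $\alpha>0$ with $\mathbb E[L^{2\alpha}+R^{2\alpha}]<+\infty$. Then there is a constant $C_\mu\in(0,\infty)$, independent of $t$, such that for every $t\ge1$ \[ e^{-2\mathcal S(\alpha)t}\,\mathbb E[M_{\nu_t}(\alpha)^2]\le\tilde h(t), \] where $\tilde h(t):=C_\mu$ if $\mu(2\alpha)<\mu(\alpha)$ and $2\mathcal S(\alpha)>-1$, and $\tilde h(t):=C_\mu h(t)$ otherwise, with $h$ as defined in the context.
   Context: $(L,R)$ is a random vector with $L,R\ge 0$ and $P\{L>0\}+P\{R>0\}>1$. For $s\ge0$ set $\mathcal S(s):=\mathbb E[L^s+R^s]-1$ (with $0^0=0$) and for $s>0$, $\mu(s):=\mathcal S(s)/s$. Let $(L_n,R_n)_{n\ge1}$ be i.i.d. copies of $(L,R)$ and $(I_n)_{n\ge1}$ independent random variables, independent of $(L_n,R_n)_n$, with $I_n$ uniform on $\{1,\dots,n\}$. Weights: $\beta_{1,1}:=1$, $(\beta_{1,2},\beta_{2,2}):=(L_1,R_1)$, and for $n\ge2$, $(\beta_{1,n+1},\dots,\beta_{n+1,n+1}):=(\beta_{1,n},\dots,\beta_{I_n-1,n},L_n\beta_{I_n,n},R_n\beta_{I_n,n},\beta_{I_n+1,n},\dots,\beta_{n,n})$. $(\nu_t)_{t\ge0}$ is a Yule process started at $\nu_0=1$ (pure birth with rate $n$ in state $n$), independent of $((L_n,R_n,I_n))_n$; $P\{\nu_t=n\}=e^{-t}(1-e^{-t})^{n-1}$.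 $M_n(\alpha):=\sum_{j=1}^n\beta_{j,n}^\alpha$. The function $h$: $h(t)=t$ if $\mu(2\alpha)<\mu(\alpha)$ and $2\mathcal S(\alpha)=-1$; $h(t)=e^{-(2\mathcal S(\alpha)+1)t}$ if $\mu(2\alpha)<\mu(\alpha)$ and $2\mathcal S(\alpha)<-1$; $h(t)=e^{2\alpha(\mu(2\alpha)-\mu(\alpha))t}$ if $\mu(2\alpha)>\mu(\alpha)$; $h(t)=e^{\eta t}$ for an arbitrary fixed $\eta>0$ (the constant $C_\mu$ may then depend on $\eta$) if $\mu(2\alpha)=\mu(\alpha)$ and $\mathcal S(\alpha)>0$; $h(t)=te^{-(2\mathcal S(\alpha)+1)t}$ if $\mu(2\alpha)=\mu(\alpha)$ and $2\mathcal S(\alpha)<-1$; $h(t)=t^2$ if $\mu(2\alpha)=\mu(\alpha)$ and $2\mathcal S(\alpha)=-1$; $h(t)=t$ if $\mu(2\alpha)=\mu(\alpha)$ and $-1<2\mathcal S(\alpha)\le0$. *)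

theory Defs
  imports "HOL-Probability.Probability"
begin

text \<open>The sigma-algebra (family of events) generated by a random variable X : M -> N,
  exactly as in the definition of indep_vars (indep_vars_def2).\<close>
definition rv_events :: "'a measure \<Rightarrow> 'b measure \<Rightarrow> ('a \<Rightarrow> 'b) \<Rightarrow> 'a set set" where
  "rv_events M N X = {X -` A \<inter> space M | A. A \<in> sets N}"

text \<open>S(s) = E[L^s + R^s] - 1 for the law D of (L,R); note 0 powr s = 0, so 0^0 = 0.\<close>
definition S_fun :: "(real \<times> real) measure \<Rightarrow> real \<Rightarrow> real" where
  "S_fun D s = (\<integral>x. fst x powr s + snd x powr s \<partial>D) - 1"

definition mu_fun :: "(real \<times> real) measure \<Rightarrow> real \<Rightarrow> real" where
  "mu_fun D s = S_fun D s / s"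

text \<open>beta lr ii n = [beta_{1,n}, ..., beta_{n,n}] built from (L_k,R_k) = lr k and I_k = ii k.\<close>
fun beta :: "(nat \<Rightarrow> real \<times> real) \<Rightarrow> (nat \<Rightarrow> nat) \<Rightarrow> nat \<Rightarrow> real list" where
  "beta lr ii 0 = []"
| "beta lr ii (Suc 0) = [1]"
| "beta lr ii (Suc (Suc m)) =
     (let b = beta lr ii (Suc m);
          k = (if m = 0 then 1 else ii (Suc m))
      in take (k - 1) b @ [fst (lr (Suc m)) * b ! (k - 1), snd (lr (Suc m)) * b ! (k - 1)] @ drop k b)"

definition Mn :: "real \<Rightarrow> (nat \<Rightarrow> real \<times> real) \<Rightarrow> (nat \<Rightarrow> nat) \<Rightarrow> nat \<Rightarrow> real" where
  "Mn \<alpha> lr ii n = (\<Sum>b\<leftarrow>beta lr ii n. b powr \<alpha>)"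

text \<open>The function h of the context, with S1 = S(alpha), m1 = mu(alpha), m2 = mu(2 alpha);
  eta is the arbitrary positive parameter used in the case mu(2a)=mu(a), S(a)>0.\<close>
definition h_fun :: "real \<Rightarrow> real \<Rightarrow> real \<Rightarrow> real \<Rightarrow> real \<Rightarrow> real \<Rightarrow> real" where
  "h_fun \<alpha> S1 m1 m2 \<eta> t =
    (if m2 < m1 \<and> 2 * S1 = -1 then t
     else if m2 < m1 \<and> 2 * S1 < -1 then exp (- (2 * S1 + 1) * t)
     else if m2 > m1 then exp (2 * \<alpha> * (m2 - m1) * t)
     else if m2 = m1 \<and> S1 > 0 then exp (\<eta> * t)
     else if m2 = m1 \<and> 2 * S1 < -1 then t * exp (- (2 * S1 + 1) * t)
     else if m2 = m1 \<and> 2 * S1 = -1 then t ^ 2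
     else if m2 = m1 \<and> -1 < 2 * S1 \<and> 2 * S1 \<le> 0 then t
     else undefined)"

definition htilde_fun :: "real \<Rightarrow> real \<Rightarrow> real \<Rightarrow> real \<Rightarrow> real \<Rightarrow> real \<Rightarrow> real \<Rightarrow> real" where
  "htilde_fun C \<alpha> S1 m1 m2 \<eta> t =
    (if m2 < m1 \<and> 2 * S1 > -1 then C else C * h_fun \<alpha> S1 m1 m2 \<eta> t)"

text \<open>Index set for the joint independence of (L_n,R_n)_{n>=1}, (I_n)_{n>=1} and nu_t.\<close>
definition idx :: "(nat + nat + unit) set" where
  "idx = Inl ` {1..} \<union> Inr ` Inl ` {1..} \<union> {Inr (Inr ())}"

end

theory Submission
  imports Defs "HOL-Analysis.Analysis"
begin


definition good :: "(nat \<Rightarrow> real \<times> real) \<Rightarrow> (nat \<Rightarrow> nat) \<Rightarrow> bool" where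
  "good lr ii \<longleftrightarrow> (\<forall>k\<ge>1. fst (lr k) \<ge> 0 \<and> snd (lr k) \<ge> 0 \<and> ii k \<in> {1..k})"

lemma beta_Suc_Suc: "beta lr ii (Suc (Suc m)) =
     (let b = beta lr ii (Suc m);
          k = (if m = 0 then 1 else ii (Suc m))
      in take (k - 1) b @ [fst (lr (Suc m)) * b ! (k - 1), snd (lr (Suc m)) * b ! (k - 1)] @ drop k b)"
  by simp

lemma beta_cong:
  assumes "\<And>k. k \<ge> 1 \<Longrightarrow> lr k = lr' k" "\<And>k. k \<ge> 1 \<Longrightarrow> ii k = ii' k"
  shows "beta lr ii n = beta lr' ii' n"
proof (induction n rule: nat_less_induct)
  case (1 n)
  show ?case
  proof (cases n)
    case 0 then show ?thesis by simp
  next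
    case (Suc m) note m = Suc
    show ?thesis
    proof (cases m)
      case 0 then show ?thesis using m by simp
    next
      case (Suc m')
      have "beta lr ii m = beta lr' ii' m" using 1 m by simp
      then show ?thesis using m Suc assms by (simp add: Let_def)
    qed
  qed
qed

lemma beta_Suc:
  assumes g: "good lr ii" and n: "n \<ge> 1"
  shows "beta lr ii (Suc n) =
     take (ii n - 1) (beta lr ii n) @ [fst (lr n) * beta lr ii n ! (ii n - 1), snd (lr n) * beta lr ii n ! (ii n - 1)]
       @ drop (ii n) (beta lr ii n)"
proof -
  obtain m where m: "n = Suc m" using n by (cases n) auto
  have "ii 1 = 1" using g unfolding good_def by auto
  then show ?thesis using m by (cases m) (simp_all add: Let_def)
qed

lemma beta_len_nonneg:
  assumes g: "good lr ii"
  shows "length (beta lr ii n) = n \<and> (\<forall>x\<in>set (beta lr ii n). x \<ge> 0)"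
proof (induction n)
  case 0 then show ?case by simp
next
  case (Suc n)
  show ?case
  proof (cases "n = 0")
    case True then show ?thesis by simp
  next
    case False
    then have n: "n \<ge> 1" by simp
    have k: "ii n \<in> {1..n}" and LR: "fst (lr n) \<ge> 0" "snd (lr n) \<ge> 0"
      using g n unfolding good_def by auto
    let ?b = "beta lr ii n"
    have bk: "?b ! (ii n - 1) \<ge> 0" using Suc k by (auto intro: nth_mem)
    have "\<forall>x\<in>set (take (ii n - 1) ?b). 0 \<le> x" "\<forall>x\<in>set (drop (ii n) ?b). 0 \<le> x"
      using Suc by (auto dest: in_set_takeD in_set_dropD)
    then show ?thesis unfolding beta_Suc[OF g n] using Suc k bk LR by auto
  qed
qed

lemma sum_list_beta_Suc:
  fixes f :: "real \<Rightarrow> 'b::ab_group_add"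
  assumes g: "good lr ii" and n: "n \<ge> 1"
  shows "(\<Sum>x\<leftarrow>beta lr ii (Suc n). f x) = (\<Sum>x\<leftarrow>beta lr ii n. f x) - f (beta lr ii n ! (ii n - 1))
     + f (fst (lr n) * beta lr ii n ! (ii n - 1)) + f (snd (lr n) * beta lr ii n ! (ii n - 1))"
proof -
  let ?b = "beta lr ii n" and ?k = "ii n"
  have k: "?k \<in> {1..n}" using g n unfolding good_def by auto
  have len: "length ?b = n" using beta_len_nonneg[OF g] by simp
  have d: "drop (?k - 1) ?b = ?b ! (?k - 1) # drop ?k ?b"
    using k len by (metis Cons_nth_drop_Suc Suc_diff_1 Suc_le_lessD atLeastAtMost_iff diff_less_Suc le_less_trans linorder_not_le zero_less_one leI)
  have "(\<Sum>x\<leftarrow>?b. f x) = (\<Sum>x\<leftarrow>take (?k - 1) ?b. f x) + (\<Sum>x\<leftarrow>drop (?k - 1) ?b. f x)"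
    by (metis append_take_drop_id map_append sum_list_append)
  then show ?thesis unfolding beta_Suc[OF g n] using d by (simp add: algebra_simps)
qed

lemma sum_list_map_nth: "(\<Sum>x\<leftarrow>xs. f x) = (\<Sum>j<length xs. f (xs ! j))"
  by (simp add: sum_list_sum_nth atLeast0LessThan)

lemma Mn_sum: "good lr ii \<Longrightarrow> Mn \<alpha> lr ii n = (\<Sum>j<n. (beta lr ii n ! j) powr \<alpha>)"
  unfolding Mn_def sum_list_map_nth using beta_len_nonneg by metis

lemma pick_sum:
  fixes G :: "nat \<Rightarrow> 'b::comm_monoid_add"
  assumes "k \<in> {1..n}"
  shows "G (k - 1) = (\<Sum>j<n. (if k = Suc j then G j else 0))"
proof -
  have "(\<Sum>j<n. (if k = Suc j then G j else 0)) = (\<Sum>j<n. (if j = k - 1 then G j else 0))"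
    using assms by (intro sum.cong) auto
  also have "\<dots> = G (k - 1)" using assms by (auto simp add: sum.delta)
  finally show ?thesis by simp
qed

lemma le_sum_pick:
  fixes y :: "nat \<Rightarrow> real"
  assumes "\<And>j. y j \<ge> 0" "i < n"
  shows "y i \<le> (\<Sum>j<n. y j)"
  using assms by (intro member_le_sum) auto

lemma M_step:
  assumes g: "good lr ii" and n: "n \<ge> 1" and a: "\<alpha> > 0"
  shows "Mn \<alpha> lr ii (Suc n) = Mn \<alpha> lr ii n - (beta lr ii n ! (ii n - 1)) powr \<alpha>
      + (fst (lr n) powr \<alpha> + snd (lr n) powr \<alpha>) * (beta lr ii n ! (ii n - 1)) powr \<alpha>"
    "(\<Sum>x\<leftarrow>beta lr ii (Suc n). (x powr \<alpha>)\<^sup>2) = (\<Sum>x\<leftarrow>beta lr ii n. (x powr \<alpha>)\<^sup>2) - ((beta lr ii n ! (ii n - 1)) powr \<alpha>)\<^sup>2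
      + ((fst (lr n) powr \<alpha>)\<^sup>2 + (snd (lr n) powr \<alpha>)\<^sup>2) * ((beta lr ii n ! (ii n - 1)) powr \<alpha>)\<^sup>2"
proof -
  have k: "ii n \<in> {1..n}" and LR: "fst (lr n) \<ge> 0" "snd (lr n) \<ge> 0"
    using g n unfolding good_def by auto
  have bk: "beta lr ii n ! (ii n - 1) \<ge> 0"
    using beta_len_nonneg[OF g, of n] k by (auto intro: nth_mem)
  show "Mn \<alpha> lr ii (Suc n) = Mn \<alpha> lr ii n - (beta lr ii n ! (ii n - 1)) powr \<alpha>
      + (fst (lr n) powr \<alpha> + snd (lr n) powr \<alpha>) * (beta lr ii n ! (ii n - 1)) powr \<alpha>"
    unfolding Mn_def sum_list_beta_Suc[OF g n] using LR bk
    by (simp add: powr_mult algebra_simps)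
  show "(\<Sum>x\<leftarrow>beta lr ii (Suc n). (x powr \<alpha>)\<^sup>2) = (\<Sum>x\<leftarrow>beta lr ii n. (x powr \<alpha>)\<^sup>2) - ((beta lr ii n ! (ii n - 1)) powr \<alpha>)\<^sup>2
      + ((fst (lr n) powr \<alpha>)\<^sup>2 + (snd (lr n) powr \<alpha>)\<^sup>2) * ((beta lr ii n ! (ii n - 1)) powr \<alpha>)\<^sup>2"
    unfolding sum_list_beta_Suc[OF g n] using LR bk
    by (simp add: powr_mult algebra_simps power_mult_distrib)
qed

lemma sq_identity:
  fixes y :: "nat \<Rightarrow> real"
  shows "(\<Sum>j<n. ((\<Sum>i<n. y i) - y j)\<^sup>2 + 2 * a * (((\<Sum>i<n. y i) - y j) * y j) + e * (y j)\<^sup>2)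
     = (real n - 2 + 2 * a) * (\<Sum>i<n. y i)\<^sup>2 + (1 - 2 * a + e) * (\<Sum>i<n. (y i)\<^sup>2)"
proof -
  define S where "S = (\<Sum>i<n. y i)"
  define Q where "Q = (\<Sum>i<n. (y i)\<^sup>2)"
  have "(\<Sum>j<n. (S - y j)\<^sup>2 + 2 * a * ((S - y j) * y j) + e * (y j)\<^sup>2)
      = (\<Sum>j<n. S\<^sup>2 + (2 * a - 2) * S * y j + (1 - 2 * a + e) * (y j)\<^sup>2)"
    by (intro sum.cong) (auto simp: power2_eq_square algebra_simps)
  also have "\<dots> = real n * S\<^sup>2 + (2 * a - 2) * S * S + (1 - 2 * a + e) * Q"
    by (simp add: sum.distrib sum_distrib_left S_def Q_def)
  finally show ?thesis unfolding S_def[symmetric] Q_def[symmetric]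
    by (simp add: power2_eq_square algebra_simps)
qed




lemma nth_splice:
  assumes k: "k \<in> {1..m}" and len: "length b = m"
  shows "(take (k - 1) b @ [x, y] @ drop k b) ! j =
    (if j < k - 1 then b ! j else if j = k - 1 then x else if j = k then y else b ! (j - 1))"
proof -
  have lt: "length (take (k - 1) b) = k - 1" using k len by (auto simp add: min_def)
  show ?thesis
  proof (cases "j < k - 1")
    case True then show ?thesis using lt by (simp add: nth_append)
  next
    case False
    then have "(take (k - 1) b @ [x, y] @ drop k b) ! j = ([x, y] @ drop k b) ! (j - (k - 1))"
      using lt by (simp add: nth_append)
    also have "\<dots> = (if j = k - 1 then x else if j = k then y else b ! (j - 1))"
    proof -
      consider "j = k - 1" | "j = k" | "j > k" using False k by force
      then show ?thesis
      proof cases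
        case 3
        then have "([x, y] @ drop k b) ! (j - (k - 1)) = drop k b ! (j - k - 1)"
          using k by (simp add: nth_append numeral_2_eq_2)
        also have "\<dots> = b ! (k + (j - k - 1))" using k len by (simp add: nth_drop)
        also have "k + (j - k - 1) = j - 1" using 3 by simp
        finally show ?thesis using 3 k by auto
      qed (use k in auto)
    qed
    finally show ?thesis using False by simp
  qed
qed

lemma beta_nth_meas:
  fixes lr :: "'a \<Rightarrow> nat \<Rightarrow> real \<times> real" and ii :: "'a \<Rightarrow> nat \<Rightarrow> nat"
  assumes g: "\<And>\<omega>. good (lr \<omega>) (ii \<omega>)"
    and lm: "\<And>k. 1 \<le> k \<Longrightarrow> k < n \<Longrightarrow> (\<lambda>\<omega>. lr \<omega> k) \<in> borel_measurable N"
    and im: "\<And>k. 1 \<le> k \<Longrightarrow> k < n \<Longrightarrow> (\<lambda>\<omega>. ii \<omega> k) \<in> measurable N (count_space UNIV)"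
  shows "(\<lambda>\<omega>. beta (lr \<omega>) (ii \<omega>) n ! j) \<in> borel_measurable N"
  using lm im
proof (induction n arbitrary: j)
  case 0 then show ?case by simp
next
  case (Suc n)
  show ?case
  proof (cases "n = 0")
    case True then show ?thesis by simp
  next
    case False
    then have n: "n \<ge> 1" by simp
    have IH: "\<And>j. (\<lambda>\<omega>. beta (lr \<omega>) (ii \<omega>) n ! j) \<in> borel_measurable N"
      using Suc by auto
    have L: "(\<lambda>\<omega>. lr \<omega> n) \<in> borel_measurable N" using Suc.prems n by auto
    have K: "(\<lambda>\<omega>. ii \<omega> n) \<in> measurable N (count_space UNIV)" using Suc.prems n by auto
    define f where "f k \<omega> = (if j < k - 1 then beta (lr \<omega>) (ii \<omega>) n ! j
      else if j = k - 1 then fst (lr \<omega> n) * beta (lr \<omega>) (ii \<omega>) n ! (k - 1)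
      else if j = k then snd (lr \<omega> n) * beta (lr \<omega>) (ii \<omega>) n ! (k - 1)
      else beta (lr \<omega>) (ii \<omega>) n ! (j - 1))" for k \<omega>
    have L': "(\<lambda>\<omega>. lr \<omega> n) \<in> N \<rightarrow>\<^sub>M borel \<Otimes>\<^sub>M borel" using L by (simp add: borel_prod)
    have fm: "(\<lambda>\<omega>. f k \<omega>) \<in> borel_measurable N" for k
      unfolding f_def using IH[measurable] L'[measurable] by measurable
    have eq: "beta (lr \<omega>) (ii \<omega>) (Suc n) ! j = f (ii \<omega> n) \<omega>" for \<omega>
    proof -
      have k: "ii \<omega> n \<in> {1..n}" using g[of \<omega>] n unfolding good_def by auto
      have len: "length (beta (lr \<omega>) (ii \<omega>) n) = n" using beta_len_nonneg[OF g] by simp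
      show ?thesis unfolding beta_Suc[OF g n] nth_splice[OF k len] f_def by simp
    qed
    show ?thesis unfolding eq by (rule measurable_compose_countable[OF fm K])
  qed
qed




lemma rv_events_Int_stable: "Int_stable (rv_events M N X)"
  unfolding Int_stable_def rv_events_def
proof safe
  fix A B assume "A \<in> sets N" "B \<in> sets N"
  then show "\<exists>C. (X -` A \<inter> space M) \<inter> (X -` B \<inter> space M) = X -` C \<inter> space M \<and> C \<in> sets N"
    by (intro exI[of _ "A \<inter> B"]) auto
qed

lemma rv_events_Pow: "rv_events M N X \<subseteq> Pow (space M)"
  unfolding rv_events_def by auto

lemma meas_sigma:
  assumes X: "X \<in> measurable M N" and sub: "rv_events M N X \<subseteq> G" and G: "G \<subseteq> Pow (space M)"
  shows "X \<in> measurable (sigma (space M) G) N"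
proof (rule measurableI)
  fix x assume "x \<in> space (sigma (space M) G)"
  then show "X x \<in> space N" using X G by (auto simp: measurable_def space_measure_of_conv)
next
  fix A assume A: "A \<in> sets N"
  have "X -` A \<inter> space M \<in> G" using sub A unfolding rv_events_def by auto
  then show "X -` A \<inter> space (sigma (space M) G) \<in> sets (sigma (space M) G)"
    using G by (auto simp: sets_measure_of_conv space_measure_of_conv)
qed

lemma meas_from_sigma:
  assumes G: "G \<subseteq> sets M" and X: "X \<in> measurable (sigma (space M) G) N"
  shows "X \<in> measurable M N"
proof -
  have G': "G \<subseteq> Pow (space M)" using G sets.sets_into_space by auto
  show ?thesis
  proof (rule measurableI)
    fix x assume "x \<in> space M"
    then show "X x \<in> space N" using X G' by (auto simp: measurable_def space_measure_of_conv)
  next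
    fix A assume A: "A \<in> sets N"
    have "X -` A \<inter> space (sigma (space M) G) \<in> sets (sigma (space M) G)"
      using X A by (rule measurable_sets)
    then have "X -` A \<inter> space M \<in> sigma_sets (space M) G"
      using G' by (simp add: sets_measure_of_conv space_measure_of_conv)
    also have "\<dots> \<subseteq> sets M" using G by (rule sets.sigma_sets_subset)
    finally show "X -` A \<inter> space M \<in> sets M" .
  qed
qed

context prob_space
begin

lemma indep_blocks:
  fixes F :: "'i \<Rightarrow> 'a set set" and B :: "'j \<Rightarrow> 'i set" and X :: "'j \<Rightarrow> 'a \<Rightarrow> ennreal"
  assumes ind: "indep_sets F K" and IS: "\<And>i. i \<in> K \<Longrightarrow> Int_stable (F i)"
    and BK: "\<And>j. j \<in> J \<Longrightarrow> B j \<subseteq> K" and disj: "disjoint_family_on B J"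
    and XM: "\<And>j. j \<in> J \<Longrightarrow> X j \<in> borel_measurable (sigma (space M) (\<Union>i\<in>B j. F i))"
  shows "indep_vars (\<lambda>_. borel) X J"
proof -
  have FE: "\<And>i. i \<in> K \<Longrightarrow> F i \<subseteq> events" using ind unfolding indep_sets_def by auto
  have ind2: "indep_sets F (\<Union>j\<in>J. B j)" by (rule indep_sets_mono_index[OF _ ind]) (use BK in blast)
  have C: "indep_sets (\<lambda>j. sigma_sets (space M) (\<Union>i\<in>B j. F i)) J"
    using indep_sets_collect_sigma[OF ind2 _ disj] IS BK by blast
  have GE: "\<And>j. j \<in> J \<Longrightarrow> (\<Union>i\<in>B j. F i) \<subseteq> events"
  proof -
    fix j assume "j \<in> J"
    then show "(\<Union>i\<in>B j. F i) \<subseteq> events" using FE BK by (meson UN_least subsetD)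
  qed
  have GP: "\<And>j. j \<in> J \<Longrightarrow> (\<Union>i\<in>B j. F i) \<subseteq> Pow (space M)"
    using GE sets.space_closed by (meson order_trans)
  show ?thesis unfolding indep_vars_def2
  proof safe
    fix j assume j: "j \<in> J"
    show "random_variable borel (X j)" by (rule meas_from_sigma[OF GE[OF j] XM[OF j]])
  next
    show "indep_sets (\<lambda>i. {X i -` A \<inter> space M |A. A \<in> sets borel}) J"
    proof (rule indep_sets_mono_sets[OF C])
      fix j assume j: "j \<in> J"
      show "{X j -` A \<inter> space M |A. A \<in> sets borel} \<subseteq> sigma_sets (space M) (\<Union>i\<in>B j. F i)"
      proof safe
        fix A :: "ennreal set" assume "A \<in> sets borel"
        then have "X j -` A \<inter> space (sigma (space M) (\<Union>i\<in>B j. F i)) \<in> sets (sigma (space M) (\<Union>i\<in>B j. F i))"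
          using XM[OF j] by (rule measurable_sets[rotated])
        then show "X j -` A \<inter> space M \<in> sigma_sets (space M) (\<Union>i\<in>B j. F i)"
          using GP[OF j] by (simp add: sets_measure_of_conv space_measure_of_conv)
      qed
    qed
  qed
qed

lemma indep3_nn:
  fixes U V W :: "'a \<Rightarrow> ennreal"
  assumes "indep_vars (\<lambda>_. borel) (\<lambda>i. if i = 0 then U else if i = 1 then V else W) {0, 1, 2::nat}"
  shows "(\<integral>\<^sup>+\<omega>. U \<omega> * V \<omega> * W \<omega> \<partial>M) = (\<integral>\<^sup>+\<omega>. U \<omega> \<partial>M) * (\<integral>\<^sup>+\<omega>. V \<omega> \<partial>M) * (\<integral>\<^sup>+\<omega>. W \<omega> \<partial>M)"
  using indep_vars_nn_integral[OF _ assms] by (simp add: mult_ac)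

lemma indep2_nn:
  fixes U V :: "'a \<Rightarrow> ennreal"
  assumes "indep_vars (\<lambda>_. borel) (\<lambda>i. if i = 0 then U else V) {0, 1::nat}"
  shows "(\<integral>\<^sup>+\<omega>. U \<omega> * V \<omega> \<partial>M) = (\<integral>\<^sup>+\<omega>. U \<omega> \<partial>M) * (\<integral>\<^sup>+\<omega>. V \<omega> \<partial>M)"
  using indep_vars_nn_integral[OF _ assms] by (simp add: mult_ac)

end




definition Pg :: "real \<Rightarrow> nat \<Rightarrow> real" where
  "Pg s n = (real (n - 1) + s) gchoose (n - 1)"

lemma Pg_1[simp]: "Pg s (Suc 0) = 1" by (simp add: Pg_def)

lemma Pg_Suc: assumes "n \<ge> 1" shows "Pg s (Suc n) = (1 + s / real n) * Pg s n"
proof -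
  have "(real n + s) gchoose n = ((real n + s) / real n) * ((real n + s - 1) gchoose (n - 1))"
    using assms by (subst gbinomial_absorption') auto
  moreover have "real n + s - 1 = real (n - 1) + s" using assms by (simp add: of_nat_diff)
  ultimately show ?thesis using assms by (simp add: Pg_def field_simps)
qed

lemma Pg_sums:
  assumes t: "t > 0"
  shows "(\<lambda>m. exp (-t) * (1 - exp (-t)) ^ m * Pg s (Suc m)) sums exp (s * t)"
proof -
  define z where "z = exp (-t) - 1"
  have z: "\<bar>z\<bar> < 1" using t by (auto simp: z_def abs_if)
  have "(\<lambda>n. ((-(s+1)) gchoose n) * z^n) sums (1 + z) powr (-(s+1))"
    by (rule gen_binomial_real[OF z])
  moreover have "((-(s+1)) gchoose n) * z^n = (1 - exp (-t)) ^ n * Pg s (Suc n)" for n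
  proof -
    have "((-(s+1)) gchoose n) = (-1)^n * ((real n + s) gchoose n)"
      by (subst gbinomial_negated_upper) (simp add: algebra_simps)
    moreover have "z ^ n = (-1)^n * (1 - exp (-t)) ^ n"
      by (simp add: z_def power_mult_distrib[symmetric])
    ultimately show ?thesis
      by (simp add: Pg_def power_mult_distrib[symmetric] mult_ac)
  qed
  moreover have "(1 + z) powr (-(s+1)) = exp ((s+1) * t)"
    by (simp add: z_def powr_def algebra_simps)
  ultimately have "(\<lambda>n. (1 - exp (-t)) ^ n * Pg s (Suc n)) sums exp ((s+1) * t)" by simp
  then have "(\<lambda>n. exp (-t) * ((1 - exp (-t)) ^ n * Pg s (Suc n))) sums (exp (-t) * exp ((s+1) * t))"
    by (rule sums_mult)
  moreover have "exp (-t) * exp ((s+1) * t) = exp (s * t)"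
    by (simp add: exp_add[symmetric] algebra_simps)
  ultimately show ?thesis by (simp add: mult_ac)
qed

lemma Pg_nonneg_mono:
  assumes "s \<ge> -1" "s \<le> s'" "n \<ge> 1"
  shows "0 \<le> Pg s n \<and> Pg s n \<le> Pg s' n"
  using assms(3)
proof (induction n rule: dec_induct)
  case base then show ?case by simp
next
  case (step n)
  have f: "0 \<le> 1 + s / real n" using assms step by (simp add: field_simps)
  have g: "1 + s / real n \<le> 1 + s' / real n" using assms step by (simp add: divide_right_mono)
  have "(1 + s / real n) * Pg s n \<le> (1 + s' / real n) * Pg s' n"
    using f g step by (meson mult_mono order_trans)
  then show ?case using step f by (simp add: Pg_Suc)
qed

lemma comp_seq:
  fixes A :: "nat \<Rightarrow> real"
  assumes s1: "s1 \<ge> -2" and S2: "S2 \<ge> -1" and d: "d \<ge> 0"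
    and A1: "A (Suc 0) = 1"
    and AS: "\<And>n. n \<ge> 1 \<Longrightarrow> A (Suc n) = (1 + s1 / real n) * A n + d * Pg S2 n / real n"
    and s2: "s2 \<ge> S2" "s2 \<noteq> s1"
    and n: "n \<ge> 1"
  shows "A n \<le> (1 - d / (s2 - s1)) * Pg s1 n + d / (s2 - s1) * Pg s2 n"
  using n
proof (induction n rule: dec_induct)
  case base then show ?case using A1 by simp
next
  case (step n)
  define y where "y = d / (s2 - s1)"
  have yd: "y * (s2 - s1) = d" using s2 by (simp add: y_def)
  define A' where "A' m = (1 - y) * Pg s1 m + y * Pg s2 m" for m
  have A'S: "A' (Suc n) = (1 + s1 / real n) * A' n + d * Pg s2 n / real n"
    using step(1) yd unfolding A'_def
    by (simp add: Pg_Suc field_simps) (simp add: algebra_simps flip: yd)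
  have PP: "Pg S2 n \<le> Pg s2 n" using Pg_nonneg_mono[OF S2 s2(1) step(1)] by simp
  show ?case
  proof (cases "n = 1")
    case True
    then have "A n = A' n" using A1 by (simp add: A'_def)
    then show ?thesis using AS[OF step(1)] A'S PP d True
      by (simp add: A'_def y_def divide_right_mono mult_left_mono)
  next
    case False
    then have c: "0 \<le> 1 + s1 / real n" using step(1) s1 by (simp add: field_simps)
    have "A (Suc n) \<le> (1 + s1 / real n) * A' n + d * Pg s2 n / real n"
      unfolding AS[OF step(1)]
      apply (intro add_mono mult_left_mono divide_right_mono)
      using step c PP d by (auto simp: A'_def y_def)
    then show ?thesis using A'S by (simp add: A'_def y_def)
  qed
qed

lemma main_bound:
  fixes A :: "nat \<Rightarrow> real"
  assumes s1: "s1 \<ge> -2" and S2: "S2 \<ge> -1" and d: "d \<ge> 0"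
    and A1: "A (Suc 0) = 1"
    and AS: "\<And>n. n \<ge> 1 \<Longrightarrow> A (Suc n) = (1 + s1 / real n) * A n + d * Pg S2 n / real n"
    and A0: "\<And>n. A n \<ge> 0"
    and s2: "s2 \<ge> S2" "s2 \<noteq> s1"
    and t: "t > 0"
  shows "summable (\<lambda>m. exp (-t) * (1 - exp (-t)) ^ m * A (Suc m))"
    "exp (- s1 * t) * (\<Sum>m. exp (-t) * (1 - exp (-t)) ^ m * A (Suc m))
       \<le> 1 + d * (exp ((s2 - s1) * t) - 1) / (s2 - s1)"
proof -
  define y where "y = d / (s2 - s1)"
  define p where "p m = exp (-t) * (1 - exp (-t)) ^ m" for m
  have p0: "p m \<ge> 0" for m using t by (simp add: p_def)
  have le: "p m * A (Suc m) \<le> (1 - y) * (p m * Pg s1 (Suc m)) + y * (p m * Pg s2 (Suc m))" for m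
  proof -
    have "A (Suc m) \<le> (1 - y) * Pg s1 (Suc m) + y * Pg s2 (Suc m)"
      unfolding y_def by (rule comp_seq[OF s1 S2 d A1 AS s2]) auto
    then have "p m * A (Suc m) \<le> p m * ((1 - y) * Pg s1 (Suc m) + y * Pg s2 (Suc m))"
      using p0[of m] by (rule mult_left_mono)
    then show ?thesis by (simp add: algebra_simps)
  qed
  have su: "(\<lambda>m. (1 - y) * (p m * Pg s1 (Suc m)) + y * (p m * Pg s2 (Suc m)))
       sums ((1 - y) * exp (s1 * t) + y * exp (s2 * t))"
    by (intro sums_add sums_mult Pg_sums[OF t, unfolded p_def[symmetric]])
  have sA: "summable (\<lambda>m. p m * A (Suc m))"
    by (rule summable_comparison_test[OF _ sums_summable[OF su]])
       (use le p0 A0 in auto)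
  then show "summable (\<lambda>m. exp (-t) * (1 - exp (-t)) ^ m * A (Suc m))" by (simp add: p_def)
  have "(\<Sum>m. p m * A (Suc m)) \<le> (1 - y) * exp (s1 * t) + y * exp (s2 * t)"
    using suminf_le[OF le sA sums_summable[OF su]] sums_unique[OF su] by simp
  then have "exp (- s1 * t) * (\<Sum>m. p m * A (Suc m)) \<le> exp (- s1 * t) * ((1 - y) * exp (s1 * t) + y * exp (s2 * t))"
    by (rule mult_left_mono) simp
  also have "\<dots> = 1 - y + y * exp ((s2 - s1) * t)"
    by (simp add: algebra_simps flip: exp_add)
  also have "\<dots> = 1 + d * (exp ((s2 - s1) * t) - 1) / (s2 - s1)"
    by (simp add: y_def algebra_simps diff_divide_distrib)
  finally show "exp (- s1 * t) * (\<Sum>m. exp (-t) * (1 - exp (-t)) ^ m * A (Suc m))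
       \<le> 1 + d * (exp ((s2 - s1) * t) - 1) / (s2 - s1)" by (simp add: p_def)
qed




fun Aseq :: "real \<Rightarrow> real \<Rightarrow> real \<Rightarrow> nat \<Rightarrow> real" where
  "Aseq s1 d S2 0 = 0"
| "Aseq s1 d S2 (Suc 0) = 1"
| "Aseq s1 d S2 (Suc (Suc m)) = (1 + s1 / real (Suc m)) * Aseq s1 d S2 (Suc m) + d * Pg S2 (Suc m) / real (Suc m)"

lemma Aseq_nonneg:
  assumes s1: "s1 \<ge> -2" and d: "d \<ge> 0" and S2: "S2 \<ge> -1" and two: "1 + s1 + d \<ge> 0"
  shows "Aseq s1 d S2 n \<ge> 0"
proof (induction n rule: nat_less_induct)
  case (1 n)
  show ?case
  proof (cases n)
    case 0 then show ?thesis by simp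
  next
    case (Suc m) note m = this
    show ?thesis
    proof (cases m)
      case 0 then show ?thesis using m by simp
    next
      case (Suc m')
      show ?thesis
      proof (cases m')
        case 0 then show ?thesis using m Suc two by simp
      next
        case (Suc m'')
        have c: "0 \<le> 1 + s1 / real m" using s1 \<open>m = Suc m'\<close> Suc by (simp add: field_simps)
        have A: "Aseq s1 d S2 m \<ge> 0" using 1 m by simp
        have P: "Pg S2 m \<ge> 0" using Pg_nonneg_mono[OF S2 order_refl, of m] \<open>m = Suc m'\<close> by simp
        show ?thesis using m \<open>m = Suc m'\<close> c A P d by simp
      qed
    qed
  qed
qed

locale yset = prob_space M for M :: "'a measure" +
  fixes D :: "(real \<times> real) measure"
    and LR :: "nat \<Rightarrow> 'a \<Rightarrow> real \<times> real"
    and I :: "nat \<Rightarrow> 'a \<Rightarrow> nat"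
    and V :: "'a \<Rightarrow> nat"
    and \<alpha> :: real
  assumes D_nonneg: "AE x in D. fst x \<ge> 0 \<and> snd x \<ge> 0"
    and LR_rv: "\<And>n. n \<ge> 1 \<Longrightarrow> LR n \<in> borel_measurable M"
    and LR_law: "\<And>n. n \<ge> 1 \<Longrightarrow> distr M borel (LR n) = D"
    and I_rv: "\<And>n. n \<ge> 1 \<Longrightarrow> I n \<in> measurable M (count_space UNIV)"
    and I_law: "\<And>n k. n \<ge> 1 \<Longrightarrow>
       measure M {\<omega> \<in> space M. I n \<omega> = k} = (if k \<in> {1..n} then 1 / real n else 0)"
    and V_rv: "V \<in> measurable M (count_space UNIV)"
    and indep: "indep_sets
       (case_sum (\<lambda>n. rv_events M borel (LR n))
          (case_sum (\<lambda>n. rv_events M (count_space UNIV) (I n))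
                    (\<lambda>_. rv_events M (count_space UNIV) V))) idx"
    and alpha_pos: "\<alpha> > 0"
    and moment: "integrable D (\<lambda>x. fst x powr (2 * \<alpha>) + snd x powr (2 * \<alpha>))"
begin

abbreviation "F \<equiv> case_sum (\<lambda>n. rv_events M borel (LR n))
          (case_sum (\<lambda>n. rv_events M (count_space UNIV) (I n))
                    (\<lambda>_. rv_events M (count_space UNIV) V))"

definition Sig :: "(nat + nat + unit) set \<Rightarrow> 'a measure" where "Sig B = sigma (space M) (\<Union>i\<in>B. F i)"

definition "LRg k \<omega> = (max 0 (fst (LR k \<omega>)), max 0 (snd (LR k \<omega>)))"
definition "Ig k \<omega> = (if I k \<omega> \<in> {1..k} then I k \<omega> else 1)"
definition "bt n \<omega> = beta (\<lambda>k. LRg k \<omega>) (\<lambda>k. Ig k \<omega>) n"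
definition "Mg n \<omega> = Mn \<alpha> (\<lambda>k. LRg k \<omega>) (\<lambda>k. Ig k \<omega>) n"
definition "Qg n \<omega> = (\<Sum>x\<leftarrow>bt n \<omega>. (x powr \<alpha>)\<^sup>2)"
definition past :: "nat \<Rightarrow> (nat + nat + unit) set" where "past n = Inl ` {1..<n} \<union> Inr ` Inl ` {1..<n}"

lemma good_g: "good (\<lambda>k. LRg k \<omega>) (\<lambda>k. Ig k \<omega>)"
  unfolding good_def LRg_def Ig_def by auto

lemma F_Pow1: "F i \<subseteq> Pow (space M)"
proof (cases i)
  case (Inl n) then show ?thesis by (simp add: rv_events_Pow)
next
  case (Inr j) then show ?thesis by (cases j) (simp_all add: rv_events_Pow)
qed

lemma F_Pow: "(\<Union>i\<in>B. F i) \<subseteq> Pow (space M)"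
  by (rule UN_least) (rule F_Pow1)

lemma F_events: "B \<subseteq> idx \<Longrightarrow> (\<Union>i\<in>B. F i) \<subseteq> events"
proof -
  assume B: "B \<subseteq> idx"
  have "\<forall>i\<in>idx. F i \<subseteq> events" using indep unfolding indep_sets_def by (rule conjunct1)
  then show ?thesis using B by (meson UN_least subsetD)
qed

lemma F_Int_stable: "Int_stable (F i)"
proof (cases i)
  case (Inl n) then show ?thesis by (simp add: rv_events_Int_stable)
next
  case (Inr j) then show ?thesis by (cases j) (simp_all add: rv_events_Int_stable)
qed

lemma Sig_meas: "B \<subseteq> idx \<Longrightarrow> f \<in> measurable (Sig B) N \<Longrightarrow> f \<in> measurable M N"
  unfolding Sig_def by (rule meas_from_sigma[OF F_events])

lemma LR_Sig: "k \<ge> 1 \<Longrightarrow> Inl k \<in> B \<Longrightarrow> LR k \<in> borel_measurable (Sig B)"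
  unfolding Sig_def by (rule meas_sigma[OF LR_rv _ F_Pow]) auto

lemma I_Sig: "k \<ge> 1 \<Longrightarrow> Inr (Inl k) \<in> B \<Longrightarrow> I k \<in> measurable (Sig B) (count_space UNIV)"
  unfolding Sig_def by (rule meas_sigma[OF I_rv _ F_Pow]) auto

lemma V_Sig: "Inr (Inr ()) \<in> B \<Longrightarrow> V \<in> measurable (Sig B) (count_space UNIV)"
  unfolding Sig_def by (rule meas_sigma[OF V_rv _ F_Pow]) auto

lemma LRg_Sig: "k \<ge> 1 \<Longrightarrow> Inl k \<in> B \<Longrightarrow> LRg k \<in> borel_measurable (Sig B)"
proof -
  assume "k \<ge> 1" "Inl k \<in> B"
  then have L: "LR k \<in> Sig B \<rightarrow>\<^sub>M borel \<Otimes>\<^sub>M borel" using LR_Sig by (simp add: borel_prod)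
  have "LRg k \<in> Sig B \<rightarrow>\<^sub>M borel \<Otimes>\<^sub>M borel"
    unfolding LRg_def[abs_def] using L[measurable] by measurable
  then show ?thesis by (simp add: borel_prod)
qed

lemma Ig_Sig: "k \<ge> 1 \<Longrightarrow> Inr (Inl k) \<in> B \<Longrightarrow> Ig k \<in> measurable (Sig B) (count_space UNIV)"
proof -
  assume "k \<ge> 1" "Inr (Inl k) \<in> B"
  then have L[measurable]: "I k \<in> measurable (Sig B) (count_space UNIV)" by (rule I_Sig)
  have "(\<lambda>x. if x \<in> {1..k} then x else 1) \<in> measurable (count_space UNIV) (count_space UNIV)" by simp
  from measurable_compose[OF L this] show ?thesis unfolding Ig_def[abs_def] by simp
qed

lemma past_sub: "1 \<le> k \<Longrightarrow> k < n \<Longrightarrow> Inl k \<in> past n \<and> Inr (Inl k) \<in> past n"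
  unfolding past_def by auto

lemma past_idx: "past n \<subseteq> idx"
  unfolding past_def idx_def by auto

lemma bt_meas: "(\<lambda>\<omega>. bt n \<omega> ! j) \<in> borel_measurable (Sig (past n))"
  unfolding bt_def
  by (rule beta_nth_meas[OF good_g]) (simp_all add: LRg_Sig Ig_Sig past_sub)

lemma len_bt: "length (bt n \<omega>) = n" and bt_nonneg: "x \<in> set (bt n \<omega>) \<Longrightarrow> x \<ge> 0"
  using beta_len_nonneg[OF good_g] unfolding bt_def by auto

lemma Mg_sum: "Mg n \<omega> = (\<Sum>j<n. (bt n \<omega> ! j) powr \<alpha>)"
  unfolding Mg_def bt_def by (rule Mn_sum[OF good_g])

lemma Qg_sum: "Qg n \<omega> = (\<Sum>j<n. ((bt n \<omega> ! j) powr \<alpha>)\<^sup>2)"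
  unfolding Qg_def sum_list_map_nth len_bt ..

lemma Mg_meas: "Mg n \<in> borel_measurable (Sig (past n))"
  unfolding Mg_sum[abs_def] using bt_meas[measurable] by measurable

lemma Qg_meas: "Qg n \<in> borel_measurable (Sig (past n))"
  unfolding Qg_sum[abs_def] using bt_meas[measurable] by measurable


lemma D_prob: "prob_space D"
  using prob_space_distr[OF LR_rv[of 1]] LR_law[of 1] by simp

lemma AE_LR: "k \<ge> 1 \<Longrightarrow> AE \<omega> in M. fst (LR k \<omega>) \<ge> 0 \<and> snd (LR k \<omega>) \<ge> 0"
proof -
  assume k: "k \<ge> 1"
  have A: "AE x in distr M borel (LR k). fst x \<ge> 0 \<and> snd x \<ge> 0" using D_nonneg LR_law[OF k] by (simp only:)
  have S: "{x \<in> space borel. fst x \<ge> 0 \<and> snd x \<ge> (0::real)} \<in> sets (borel :: (real \<times> real) measure)"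
  proof -
    have "(\<lambda>x::real\<times>real. fst x \<ge> 0 \<and> snd x \<ge> 0) \<in> measurable (borel \<Otimes>\<^sub>M borel) (count_space UNIV)"
      by measurable
    then have "(\<lambda>x::real\<times>real. fst x \<ge> 0 \<and> snd x \<ge> 0) \<in> measurable borel (count_space UNIV)"
      by (simp add: borel_prod)
    then show ?thesis by (simp add: pred_def)
  qed
  from A show ?thesis by (subst (asm) AE_distr_iff[OF LR_rv[OF k] S])
qed

lemma AE_I: "k \<ge> 1 \<Longrightarrow> AE \<omega> in M. I k \<omega> \<in> {1..k}"
proof -
  assume k: "k \<ge> 1"
  have "AE \<omega> in M. I k \<omega> \<noteq> j" if j: "j \<notin> {1..k}" for j
  proof -
    have S: "{\<omega> \<in> space M. I k \<omega> = j} \<in> sets M"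
      using I_rv[OF k] by (simp add: pred_def[symmetric])
    have "measure M {\<omega> \<in> space M. I k \<omega> = j} = 0" using I_law[OF k] j by simp
    then have "emeasure M {\<omega> \<in> space M. I k \<omega> = j} = 0"
      using S by (simp add: emeasure_eq_measure)
    then show ?thesis using S by (subst AE_iff_measurable[OF S]) auto
  qed
  then have "AE \<omega> in M. \<forall>j. j \<notin> {1..k} \<longrightarrow> I k \<omega> \<noteq> j"
    by (subst AE_all_countable) auto
  then show ?thesis by eventually_elim auto
qed

lemma AE_good: "AE \<omega> in M. \<forall>k. k \<ge> 1 \<longrightarrow> LRg k \<omega> = LR k \<omega> \<and> Ig k \<omega> = I k \<omega>"
proof (subst AE_all_countable, intro allI)
  fix k :: nat
  show "AE \<omega> in M. k \<ge> 1 \<longrightarrow> LRg k \<omega> = LR k \<omega> \<and> Ig k \<omega> = I k \<omega>"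
  proof (cases "k \<ge> 1")
    case True
    show ?thesis using AE_LR[OF True] AE_I[OF True]
      by eventually_elim (auto simp: LRg_def Ig_def prod_eq_iff)
  qed simp
qed

lemma AE_Mg: "AE \<omega> in M. \<forall>n. Mg n \<omega> = Mn \<alpha> (\<lambda>k. LR k \<omega>) (\<lambda>k. I k \<omega>) n"
  using AE_good
proof eventually_elim
  case (elim \<omega>)
  then have "beta (\<lambda>k. LRg k \<omega>) (\<lambda>k. Ig k \<omega>) n = beta (\<lambda>k. LR k \<omega>) (\<lambda>k. I k \<omega>) n" for n
    by (intro beta_cong) auto
  then show ?case by (simp add: Mg_def Mn_def)
qed

lemma W_law:
  fixes h :: "real \<times> real \<Rightarrow> real"
  assumes n: "n \<ge> 1" and hm: "h \<in> borel_measurable borel" and h0: "\<And>x. h x \<ge> 0" and hi: "integrable D h"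
  shows "(\<integral>\<^sup>+\<omega>. ennreal (h (LRg n \<omega>)) \<partial>M) = ennreal (\<integral>x. h x \<partial>D)"
proof -
  define cl :: "real \<times> real \<Rightarrow> real \<times> real" where "cl x = (max 0 (fst x), max 0 (snd x))" for x
  have clm: "cl \<in> borel_measurable borel"
  proof -
    have "cl \<in> (borel \<Otimes>\<^sub>M borel) \<rightarrow>\<^sub>M (borel \<Otimes>\<^sub>M borel)" unfolding cl_def[abs_def] by measurable
    then show ?thesis by (simp add: borel_prod)
  qed
  have "(\<integral>\<^sup>+\<omega>. ennreal (h (LRg n \<omega>)) \<partial>M) = (\<integral>\<^sup>+\<omega>. ennreal (h (cl (LR n \<omega>))) \<partial>M)"
    by (simp add: LRg_def cl_def)
  also have "\<dots> = (\<integral>\<^sup>+x. ennreal (h (cl x)) \<partial>distr M borel (LR n))"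
    using clm hm LR_rv[OF n] by (subst nn_integral_distr) auto
  also have "\<dots> = (\<integral>\<^sup>+x. ennreal (h (cl x)) \<partial>D)" using LR_law[OF n] by simp
  also have "\<dots> = (\<integral>\<^sup>+x. ennreal (h x) \<partial>D)"
    using D_nonneg by (intro nn_integral_cong_AE) (auto simp: cl_def)
  also have "\<dots> = ennreal (\<integral>x. h x \<partial>D)"
    using hi h0 by (intro nn_integral_eq_integral) auto
  finally show ?thesis .
qed

lemma I_prob:
  assumes n: "n \<ge> 1" and j: "j \<in> {1..n}"
  shows "(\<integral>\<^sup>+\<omega>. ennreal (if Ig n \<omega> = j then 1 else 0) \<partial>M) = ennreal (1 / real n)"
proof -
  have S: "{\<omega> \<in> space M. I n \<omega> = j} \<in> sets M"
    using I_rv[OF n] by (simp add: pred_def[symmetric])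
  have "(\<integral>\<^sup>+\<omega>. ennreal (if Ig n \<omega> = j then 1 else 0) \<partial>M)
     = (\<integral>\<^sup>+\<omega>. indicator {\<omega> \<in> space M. I n \<omega> = j} \<omega> \<partial>M)"
    using AE_good n by (intro nn_integral_cong_AE) (auto elim!: eventually_mono simp: indicator_def)
  also have "\<dots> = emeasure M {\<omega> \<in> space M. I n \<omega> = j}" using S by simp
  also have "\<dots> = ennreal (1 / real n)" using S I_law[OF n, of j] j by (simp add: emeasure_eq_measure)
  finally show ?thesis .
qed


lemma indep3_blocks:
  fixes U V1 W :: "'a \<Rightarrow> ennreal"
  assumes n: "n \<ge> 1"
    and Um: "U \<in> borel_measurable (Sig (past n))"
    and Vm: "V1 \<in> borel_measurable (Sig {Inr (Inl n)})"
    and Wm: "W \<in> borel_measurable (Sig {Inl n})"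
  shows "(\<integral>\<^sup>+\<omega>. U \<omega> * V1 \<omega> * W \<omega> \<partial>M) = (\<integral>\<^sup>+\<omega>. U \<omega> \<partial>M) * (\<integral>\<^sup>+\<omega>. V1 \<omega> \<partial>M) * (\<integral>\<^sup>+\<omega>. W \<omega> \<partial>M)"
proof (rule indep3_nn)
  define B :: "nat \<Rightarrow> (nat + nat + unit) set" where
    "B i = (if i = 0 then past n else if i = 1 then {Inr (Inl n)} else {Inl n})" for i
  show "indep_vars (\<lambda>_. borel) (\<lambda>i. if i = 0 then U else if i = 1 then V1 else W) {0, 1, 2::nat}"
  proof (rule indep_blocks[OF indep, of _ B])
    show "\<And>i. i \<in> idx \<Longrightarrow> Int_stable (F i)" by (rule F_Int_stable)
    show "\<And>j. j \<in> {0, 1, 2} \<Longrightarrow> B j \<subseteq> idx"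
      using n past_idx unfolding B_def idx_def by auto
    show "disjoint_family_on B {0, 1, 2}"
      unfolding disjoint_family_on_def B_def past_def by auto
    show "\<And>j. j \<in> {0, 1, 2} \<Longrightarrow> (if j = 0 then U else if j = 1 then V1 else W)
        \<in> borel_measurable (sigma (space M) (\<Union>i\<in>B j. F i))"
    proof -
      fix j :: nat assume "j \<in> {0, 1, 2}"
      then consider "j = 0" | "j = 1" | "j = 2" by auto
      then show "(if j = 0 then U else if j = 1 then V1 else W)
        \<in> borel_measurable (sigma (space M) (\<Union>i\<in>B j. F i))"
        by cases (use Um Vm Wm in \<open>simp_all add: Sig_def B_def\<close>)
    qed
  qed
qed

lemma indep2_blocks:
  fixes U V1 :: "'a \<Rightarrow> ennreal"
  assumes Um: "U \<in> borel_measurable (Sig (past n))"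
    and Vm: "V1 \<in> borel_measurable (Sig {Inr (Inr ())})"
  shows "(\<integral>\<^sup>+\<omega>. U \<omega> * V1 \<omega> \<partial>M) = (\<integral>\<^sup>+\<omega>. U \<omega> \<partial>M) * (\<integral>\<^sup>+\<omega>. V1 \<omega> \<partial>M)"
proof (rule indep2_nn)
  define B :: "nat \<Rightarrow> (nat + nat + unit) set" where
    "B i = (if i = 0 then past n else {Inr (Inr ())})" for i
  show "indep_vars (\<lambda>_. borel) (\<lambda>i. if i = 0 then U else V1) {0, 1::nat}"
  proof (rule indep_blocks[OF indep, of _ B])
    show "\<And>i. i \<in> idx \<Longrightarrow> Int_stable (F i)" by (rule F_Int_stable)
    show "\<And>j. j \<in> {0, 1} \<Longrightarrow> B j \<subseteq> idx"
      using past_idx unfolding B_def idx_def by auto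
    show "disjoint_family_on B {0, 1}"
      unfolding disjoint_family_on_def B_def past_def by auto
    show "\<And>j. j \<in> {0, 1} \<Longrightarrow> (if j = 0 then U else V1)
        \<in> borel_measurable (sigma (space M) (\<Union>i\<in>B j. F i))"
    proof -
      fix j :: nat assume "j \<in> {0, 1}"
      then consider "j = 0" | "j = 1" by auto
      then show "(if j = 0 then U else V1)
        \<in> borel_measurable (sigma (space M) (\<Union>i\<in>B j. F i))"
        by cases (use Um Vm in \<open>simp_all add: Sig_def B_def\<close>)
    qed
  qed
qed

lemma step_expect:
  fixes U :: "nat \<Rightarrow> nat \<Rightarrow> 'a \<Rightarrow> real" and W :: "nat \<Rightarrow> real \<times> real \<Rightarrow> real" and R :: "nat set"
  assumes n: "n \<ge> 1" and R: "finite R"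
    and U0: "\<And>r j \<omega>. U r j \<omega> \<ge> 0"
    and Um: "\<And>r j. r \<in> R \<Longrightarrow> j < n \<Longrightarrow> U r j \<in> borel_measurable (Sig (past n))"
    and W0: "\<And>r x. W r x \<ge> 0" and Wm: "\<And>r. r \<in> R \<Longrightarrow> W r \<in> borel_measurable borel"
    and Wi: "\<And>r. r \<in> R \<Longrightarrow> integrable D (W r)"
  shows "(\<integral>\<^sup>+\<omega>. ennreal (\<Sum>j<n. \<Sum>r\<in>R. U r j \<omega> * (if Ig n \<omega> = Suc j then 1 else 0) * W r (LRg n \<omega>)) \<partial>M)
     = ennreal (1 / real n) * (\<integral>\<^sup>+\<omega>. ennreal (\<Sum>j<n. \<Sum>r\<in>R. (\<integral>x. W r x \<partial>D) * U r j \<omega>) \<partial>M)"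
proof -
  have in1: "{Inr (Inl n)} \<subseteq> idx" "{Inl n} \<subseteq> idx" using n unfolding idx_def by auto
  have UmS: "(\<lambda>\<omega>. ennreal (U r j \<omega>)) \<in> borel_measurable (Sig (past n))" if "r \<in> R" "j < n" for r j
    using Um[OF that] by simp
  have UmM: "(\<lambda>\<omega>. ennreal (U r j \<omega>)) \<in> borel_measurable M" if "r \<in> R" "j < n" for r j
    by (rule Sig_meas[OF past_idx UmS[OF that]])
  have VmS: "(\<lambda>\<omega>. ennreal (if Ig n \<omega> = Suc j then 1 else 0)) \<in> borel_measurable (Sig {Inr (Inl n)})" for j
  proof -
    have [measurable]: "Ig n \<in> measurable (Sig {Inr (Inl n)}) (count_space UNIV)" using n by (intro Ig_Sig) auto
    show ?thesis by measurable
  qed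
  have VmM: "(\<lambda>\<omega>. ennreal (if Ig n \<omega> = Suc j then 1 else 0)) \<in> borel_measurable M" for j
    by (rule Sig_meas[OF in1(1) VmS])
  have WmS: "(\<lambda>\<omega>. ennreal (W r (LRg n \<omega>))) \<in> borel_measurable (Sig {Inl n})" if "r \<in> R" for r
  proof -
    have "LRg n \<in> borel_measurable (Sig {Inl n})" using n by (intro LRg_Sig) auto
    from measurable_compose[OF this Wm[OF that]] show ?thesis by measurable
  qed
  have WmM: "(\<lambda>\<omega>. ennreal (W r (LRg n \<omega>))) \<in> borel_measurable M" if "r \<in> R" for r
    by (rule Sig_meas[OF in1(2) WmS[OF that]])
  have IW: "(\<integral>\<^sup>+\<omega>. ennreal (W r (LRg n \<omega>)) \<partial>M) = ennreal (\<integral>x. W r x \<partial>D)" if "r \<in> R" for r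
    using W_law[OF n Wm[OF that] W0 Wi[OF that]] .
  have IV: "(\<integral>\<^sup>+\<omega>. ennreal (if Ig n \<omega> = Suc j then 1 else 0) \<partial>M) = ennreal (1 / real n)" if "j < n" for j
    using I_prob[OF n, of "Suc j"] that by simp
  have IWnn: "(\<integral>x. W r x \<partial>D) \<ge> 0" for r using W0 by (simp add: integral_nonneg)
  have "(\<integral>\<^sup>+\<omega>. ennreal (\<Sum>j<n. \<Sum>r\<in>R. U r j \<omega> * (if Ig n \<omega> = Suc j then 1 else 0) * W r (LRg n \<omega>)) \<partial>M)
     = (\<integral>\<^sup>+\<omega>. (\<Sum>j<n. \<Sum>r\<in>R. ennreal (U r j \<omega>) * ennreal (if Ig n \<omega> = Suc j then 1 else 0) * ennreal (W r (LRg n \<omega>))) \<partial>M)"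
    using U0 W0 by (intro nn_integral_cong) (simp add: sum_nonneg ennreal_mult flip: sum_ennreal)
  also have "\<dots> = (\<Sum>j<n. \<Sum>r\<in>R. (\<integral>\<^sup>+\<omega>. ennreal (U r j \<omega>) * ennreal (if Ig n \<omega> = Suc j then 1 else 0) * ennreal (W r (LRg n \<omega>)) \<partial>M))"
  proof -
    have pm: "(\<lambda>\<omega>. ennreal (U r j \<omega>) * ennreal (if Ig n \<omega> = Suc j then 1 else 0) * ennreal (W r (LRg n \<omega>))) \<in> borel_measurable M"
      if "r \<in> R" "j < n" for r j
      by (intro borel_measurable_times_ennreal UmM[OF that] VmM WmM[OF that(1)])
    have pm2: "(\<lambda>\<omega>. \<Sum>r\<in>R. ennreal (U r j \<omega>) * ennreal (if Ig n \<omega> = Suc j then 1 else 0) * ennreal (W r (LRg n \<omega>))) \<in> borel_measurable M"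
      if "j < n" for j
      using pm that by (intro borel_measurable_sum) auto
    have "(\<integral>\<^sup>+\<omega>. (\<Sum>j<n. \<Sum>r\<in>R. ennreal (U r j \<omega>) * ennreal (if Ig n \<omega> = Suc j then 1 else 0) * ennreal (W r (LRg n \<omega>))) \<partial>M)
      = (\<Sum>j<n. (\<integral>\<^sup>+\<omega>. (\<Sum>r\<in>R. ennreal (U r j \<omega>) * ennreal (if Ig n \<omega> = Suc j then 1 else 0) * ennreal (W r (LRg n \<omega>))) \<partial>M))"
      by (rule nn_integral_sum) (use pm2 in auto)
    also have "\<dots> = (\<Sum>j<n. \<Sum>r\<in>R. (\<integral>\<^sup>+\<omega>. ennreal (U r j \<omega>) * ennreal (if Ig n \<omega> = Suc j then 1 else 0) * ennreal (W r (LRg n \<omega>)) \<partial>M))"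
      by (intro sum.cong refl nn_integral_sum) (use pm in auto)
    finally show ?thesis .
  qed
  also have "\<dots> = (\<Sum>j<n. \<Sum>r\<in>R. (\<integral>\<^sup>+\<omega>. ennreal (U r j \<omega>) \<partial>M) * ennreal (1 / real n) * ennreal (\<integral>x. W r x \<partial>D))"
    by (intro sum.cong refl) (simp add: indep3_blocks[OF n UmS VmS WmS] IW IV)
  also have "\<dots> = ennreal (1 / real n) * (\<Sum>j<n. \<Sum>r\<in>R. ennreal (\<integral>x. W r x \<partial>D) * (\<integral>\<^sup>+\<omega>. ennreal (U r j \<omega>) \<partial>M))"
    by (simp add: sum_distrib_left mult_ac)
  also have "(\<Sum>j<n. \<Sum>r\<in>R. ennreal (\<integral>x. W r x \<partial>D) * (\<integral>\<^sup>+\<omega>. ennreal (U r j \<omega>) \<partial>M))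
      = (\<integral>\<^sup>+\<omega>. (\<Sum>j<n. \<Sum>r\<in>R. ennreal (\<integral>x. W r x \<partial>D) * ennreal (U r j \<omega>)) \<partial>M)"
  proof -
    have cm: "(\<lambda>\<omega>. ennreal (\<integral>x. W r x \<partial>D) * ennreal (U r j \<omega>)) \<in> borel_measurable M"
      if "r \<in> R" "j < n" for r j
      by (intro borel_measurable_times_ennreal UmM[OF that] measurable_const) simp
    have cm2: "(\<lambda>\<omega>. \<Sum>r\<in>R. ennreal (\<integral>x. W r x \<partial>D) * ennreal (U r j \<omega>)) \<in> borel_measurable M"
      if "j < n" for j
      using cm that by (intro borel_measurable_sum) auto
    have "(\<integral>\<^sup>+\<omega>. (\<Sum>j<n. \<Sum>r\<in>R. ennreal (\<integral>x. W r x \<partial>D) * ennreal (U r j \<omega>)) \<partial>M)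
       = (\<Sum>j<n. (\<integral>\<^sup>+\<omega>. (\<Sum>r\<in>R. ennreal (\<integral>x. W r x \<partial>D) * ennreal (U r j \<omega>)) \<partial>M))"
      by (rule nn_integral_sum) (use cm2 in auto)
    also have "\<dots> = (\<Sum>j<n. \<Sum>r\<in>R. (\<integral>\<^sup>+\<omega>. ennreal (\<integral>x. W r x \<partial>D) * ennreal (U r j \<omega>) \<partial>M))"
      by (intro sum.cong refl nn_integral_sum) (use cm in auto)
    also have "\<dots> = (\<Sum>j<n. \<Sum>r\<in>R. ennreal (\<integral>x. W r x \<partial>D) * (\<integral>\<^sup>+\<omega>. ennreal (U r j \<omega>) \<partial>M))"
      by (intro sum.cong refl nn_integral_cmult) (use UmM in auto)
    finally show ?thesis by simp
  qed
  also have "\<dots> = (\<integral>\<^sup>+\<omega>. ennreal (\<Sum>j<n. \<Sum>r\<in>R. (\<integral>x. W r x \<partial>D) * U r j \<omega>) \<partial>M)"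
    using U0 IWnn by (intro nn_integral_cong) (simp add: sum_nonneg ennreal_mult flip: sum_ennreal)
  finally show ?thesis .
qed


definition "Xf x = fst x powr \<alpha> + snd x powr \<alpha>"
definition "Yf x = (fst x powr \<alpha>)\<^sup>2 + (snd x powr \<alpha>)\<^sup>2"

lemma Xf_meas[measurable]: "Xf \<in> borel_measurable borel"
proof -
  have "Xf \<in> borel_measurable (borel \<Otimes>\<^sub>M borel)" unfolding Xf_def[abs_def] by measurable
  then show ?thesis by (simp add: borel_prod)
qed

lemma Yf_meas[measurable]: "Yf \<in> borel_measurable borel"
proof -
  have "Yf \<in> borel_measurable (borel \<Otimes>\<^sub>M borel)" unfolding Yf_def[abs_def] by measurable
  then show ?thesis by (simp add: borel_prod)
qed

lemma Xf_nonneg: "Xf x \<ge> 0" and Yf_nonneg: "Yf x \<ge> 0"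
  unfolding Xf_def Yf_def by auto

lemma powr_sq: "(u powr \<alpha>)\<^sup>2 = u powr (2 * \<alpha>)" for u :: real
  unfolding power2_eq_square powr_add[symmetric] mult_2 ..

lemma Yf_eq: "Yf x = fst x powr (2 * \<alpha>) + snd x powr (2 * \<alpha>)"
  unfolding Yf_def powr_sq ..

lemma Yf_int: "integrable D Yf"
proof -
  have "Yf = (\<lambda>x. fst x powr (2 * \<alpha>) + snd x powr (2 * \<alpha>))" by (rule ext) (rule Yf_eq)
  then show ?thesis using moment by (simp only:)
qed

lemma sets_D: "sets D = sets borel"
  by (metis LR_law le_refl sets_distr)


lemma Xf2_int: "integrable D (\<lambda>x. (Xf x)\<^sup>2)"
proof (rule Bochner_Integration.integrable_bound)
  show "integrable D (\<lambda>x. 2 * Yf x)" using Yf_int by (rule integrable_mult_right)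
  have X2: "(\<lambda>x. (Xf x)\<^sup>2) \<in> borel_measurable borel"
    using Xf_meas by (rule borel_measurable_power)
  show "(\<lambda>x. (Xf x)\<^sup>2) \<in> borel_measurable D"
    using measurable_cong_sets[OF sets_D refl, of borel] X2 by metis
  show "AE x in D. norm ((Xf x)\<^sup>2) \<le> norm (2 * Yf x)"
  proof (intro AE_I2)
    fix x :: "real \<times> real"
    define u where "u = fst x powr \<alpha>"
    define v where "v = snd x powr \<alpha>"
    have "(u + v)\<^sup>2 \<le> 2 * (u\<^sup>2 + v\<^sup>2)"
    proof -
      have "0 \<le> (u - v)\<^sup>2" by simp
      then show ?thesis by (simp add: power2_eq_square algebra_simps)
    qed
    moreover have "Xf x = u + v" "Yf x = u\<^sup>2 + v\<^sup>2" by (simp_all add: Xf_def Yf_def u_def v_def)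
    moreover have "0 \<le> u\<^sup>2 + v\<^sup>2" by simp
    ultimately show "norm ((Xf x)\<^sup>2) \<le> norm (2 * Yf x)" by simp
  qed
qed


lemma Xf_int: "integrable D Xf"
proof (rule Bochner_Integration.integrable_bound)
  interpret D: prob_space D by (rule D_prob)
  show "integrable D (\<lambda>x. 2 + Yf x)" using Yf_int by simp
  show "Xf \<in> borel_measurable D"
    using measurable_cong_sets[OF sets_D refl, of borel] Xf_meas by metis
  show "AE x in D. norm (Xf x) \<le> norm (2 + Yf x)"
  proof (intro AE_I2)
    fix x :: "real \<times> real"
    define u where "u = fst x powr \<alpha>"
    define v where "v = snd x powr \<alpha>"
    have "u \<le> 1 + u\<^sup>2" "v \<le> 1 + v\<^sup>2"
    proof -
      have "0 \<le> (u - 1)\<^sup>2" "0 \<le> (v - 1)\<^sup>2" "0 \<le> u" "0 \<le> v" by (simp_all add: u_def v_def)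
      then show "u \<le> 1 + u\<^sup>2" "v \<le> 1 + v\<^sup>2" by (simp_all add: power2_eq_square algebra_simps)
    qed
    moreover have "Xf x = u + v" "Yf x = u\<^sup>2 + v\<^sup>2" "0 \<le> u" "0 \<le> v" by (simp_all add: Xf_def Yf_def u_def v_def)
    ultimately show "norm (Xf x) \<le> norm (2 + Yf x)" by simp
  qed
qed

definition "ca = (\<integral>x. Xf x \<partial>D)"
definition "ce = (\<integral>x. (Xf x)\<^sup>2 \<partial>D)"
definition "cb = (\<integral>x. Yf x \<partial>D)"

lemma ca_S: "ca = S_fun D \<alpha> + 1"
  unfolding ca_def S_fun_def Xf_def by simp

lemma cb_S: "cb = S_fun D (2 * \<alpha>) + 1"
  unfolding cb_def S_fun_def Yf_eq by simp

lemma ca_nonneg: "ca \<ge> 0" and cb_nonneg: "cb \<ge> 0" and ce_nonneg: "ce \<ge> 0"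
  unfolding ca_def cb_def ce_def using Xf_nonneg Yf_nonneg by (simp_all add: integral_nonneg)

lemma d_nonneg: "1 - 2 * ca + ce \<ge> 0"
proof -
  interpret D: prob_space D by (rule D_prob)
  have "(\<integral>x. (Xf x - 1)\<^sup>2 \<partial>D) = (\<integral>x. (Xf x)\<^sup>2 - 2 * Xf x + 1 \<partial>D)"
    by (simp add: power2_eq_square algebra_simps)
  also have "\<dots> = ce - 2 * ca + 1"
    using Xf_int Xf2_int by (simp add: ce_def ca_def D.prob_space)
  finally have "ce - 2 * ca + 1 = (\<integral>x. (Xf x - 1)\<^sup>2 \<partial>D)" by simp
  also have "\<dots> \<ge> 0" by (simp add: integral_nonneg)
  finally show ?thesis by simp
qed


lemma y_meas: "(\<lambda>\<omega>. (bt n \<omega> ! j) powr \<alpha>) \<in> borel_measurable (Sig (past n))"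
  using bt_meas[measurable] by measurable

lemma Mg_Suc_int:
  assumes n: "n \<ge> 1"
  shows "(\<integral>\<^sup>+\<omega>. ennreal ((Mg (Suc n) \<omega>)\<^sup>2) \<partial>M) = ennreal (1 / real n) *
    (\<integral>\<^sup>+\<omega>. ennreal ((real n - 2 + 2 * ca) * (Mg n \<omega>)\<^sup>2 + (1 - 2 * ca + ce) * Qg n \<omega>) \<partial>M)"
proof -
  define y where "y j \<omega> = (bt n \<omega> ! j) powr \<alpha>" for j \<omega>
  define U :: "nat \<Rightarrow> nat \<Rightarrow> 'a \<Rightarrow> real" where "U r j \<omega> = (if r = 0 then (max 0 (Mg n \<omega> - y j \<omega>))\<^sup>2
      else if r = 1 then 2 * max 0 (Mg n \<omega> - y j \<omega>) * y j \<omega> else (y j \<omega>)\<^sup>2)" for r j \<omega>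
  define W :: "nat \<Rightarrow> real \<times> real \<Rightarrow> real" where
    "W r x = (if r = 0 then 1 else if r = 1 then Xf x else (Xf x)\<^sup>2)" for r x
  have y0: "y j \<omega> \<ge> 0" for j \<omega> by (simp add: y_def)
  have S: "Mg n \<omega> = (\<Sum>j<n. y j \<omega>)" for \<omega> by (simp add: Mg_sum y_def)
  have Q: "Qg n \<omega> = (\<Sum>j<n. (y j \<omega>)\<^sup>2)" for \<omega> by (simp add: Qg_sum y_def)
  have pw: "(Mg (Suc n) \<omega>)\<^sup>2 = (\<Sum>j<n. \<Sum>r\<in>{0,1,2}. U r j \<omega> * (if Ig n \<omega> = Suc j then 1 else 0) * W r (LRg n \<omega>))" for \<omega>
  proof -
    let ?k = "Ig n \<omega>"
    have k: "?k \<in> {1..n}" using good_g[of \<omega>] n unfolding good_def by auto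
    have step: "Mg (Suc n) \<omega> = Mg n \<omega> - y (?k - 1) \<omega> + Xf (LRg n \<omega>) * y (?k - 1) \<omega>"
      using M_step(1)[OF good_g n alpha_pos, of \<omega>] by (simp add: Mg_def y_def bt_def Xf_def)
    define G where "G j = (Mg n \<omega> - y j \<omega>)\<^sup>2 + 2 * (Mg n \<omega> - y j \<omega>) * y j \<omega> * Xf (LRg n \<omega>)
      + (y j \<omega>)\<^sup>2 * (Xf (LRg n \<omega>))\<^sup>2" for j
    have "(Mg (Suc n) \<omega>)\<^sup>2 = G (?k - 1)" unfolding step G_def by (simp add: power2_eq_square algebra_simps)
    also have "\<dots> = (\<Sum>j<n. if ?k = Suc j then G j else 0)" by (rule pick_sum[OF k])
    also have "\<dots> = (\<Sum>j<n. \<Sum>r\<in>{0,1,2}. U r j \<omega> * (if ?k = Suc j then 1 else 0) * W r (LRg n \<omega>))"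
    proof (intro sum.cong refl)
      fix j assume j: "j \<in> {..<n}"
      have "y j \<omega> \<le> Mg n \<omega>" unfolding S using j y0 by (intro le_sum_pick) auto
      then show "(if ?k = Suc j then G j else 0) = (\<Sum>r\<in>{0,1,2}. U r j \<omega> * (if ?k = Suc j then 1 else 0) * W r (LRg n \<omega>))"
        by (simp add: U_def W_def G_def max_def)
    qed
    finally show ?thesis .
  qed
  interpret D: prob_space D by (rule D_prob)
  have WI: "(\<integral>x. W 0 x \<partial>D) = 1" "(\<integral>x. W 1 x \<partial>D) = ca" "(\<integral>x. W 2 x \<partial>D) = ce"
    by (simp_all add: W_def ca_def ce_def D.prob_space)
  have rhs: "(\<Sum>j<n. \<Sum>r\<in>{0,1,2}. (\<integral>x. W r x \<partial>D) * U r j \<omega>)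
      = (real n - 2 + 2 * ca) * (Mg n \<omega>)\<^sup>2 + (1 - 2 * ca + ce) * Qg n \<omega>" for \<omega>
  proof -
    have "(\<Sum>j<n. \<Sum>r\<in>{0,1,2}. (\<integral>x. W r x \<partial>D) * U r j \<omega>) = (\<Sum>j<n. ((\<Sum>i<n. y i \<omega>) - y j \<omega>)\<^sup>2
        + 2 * ca * (((\<Sum>i<n. y i \<omega>) - y j \<omega>) * y j \<omega>) + ce * (y j \<omega>)\<^sup>2)"
    proof (intro sum.cong refl)
      fix j assume j: "j \<in> {..<n}"
      have "y j \<omega> \<le> Mg n \<omega>" unfolding S using j y0 by (intro le_sum_pick) auto
      then show "(\<Sum>r\<in>{0,1,2}. (\<integral>x. W r x \<partial>D) * U r j \<omega>) = ((\<Sum>i<n. y i \<omega>) - y j \<omega>)\<^sup>2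
        + 2 * ca * (((\<Sum>i<n. y i \<omega>) - y j \<omega>) * y j \<omega>) + ce * (y j \<omega>)\<^sup>2"
        using WI by (simp add: U_def max_def S[symmetric])
    qed
    also have "\<dots> = (real n - 2 + 2 * ca) * (\<Sum>i<n. y i \<omega>)\<^sup>2 + (1 - 2 * ca + ce) * (\<Sum>i<n. (y i \<omega>)\<^sup>2)"
      by (rule sq_identity)
    finally show ?thesis unfolding S Q .
  qed
  have ym[measurable]: "(\<lambda>\<omega>. y j \<omega>) \<in> borel_measurable (Sig (past n))" for j
    unfolding y_def by (rule y_meas)
  have Mgm[measurable]: "Mg n \<in> borel_measurable (Sig (past n))" by (rule Mg_meas)
  have "(\<integral>\<^sup>+\<omega>. ennreal ((Mg (Suc n) \<omega>)\<^sup>2) \<partial>M)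
      = (\<integral>\<^sup>+\<omega>. ennreal (\<Sum>j<n. \<Sum>r\<in>{0,1,2}. U r j \<omega> * (if Ig n \<omega> = Suc j then 1 else 0) * W r (LRg n \<omega>)) \<partial>M)"
    by (simp only: pw)
  also have "\<dots> = ennreal (1 / real n) * (\<integral>\<^sup>+\<omega>. ennreal (\<Sum>j<n. \<Sum>r\<in>{0,1,2}. (\<integral>x. W r x \<partial>D) * U r j \<omega>) \<partial>M)"
  proof (rule step_expect[OF n])
    show "finite {0, 1, 2::nat}" by simp
    show "\<And>r j \<omega>. U r j \<omega> \<ge> 0" using y0 by (simp add: U_def)
    show "\<And>r j. r \<in> {0, 1, 2} \<Longrightarrow> j < n \<Longrightarrow> U r j \<in> borel_measurable (Sig (past n))"
      unfolding U_def[abs_def] by auto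
    show "\<And>r x. W r x \<ge> 0" using Xf_nonneg by (simp add: W_def)
    show "\<And>r. r \<in> {0, 1, 2} \<Longrightarrow> W r \<in> borel_measurable borel"
      unfolding W_def[abs_def] by auto
    show "\<And>r. r \<in> {0, 1, 2} \<Longrightarrow> integrable D (W r)"
      unfolding W_def[abs_def] using Xf_int Xf2_int by auto
  qed
  also have "\<dots> = ennreal (1 / real n) *
    (\<integral>\<^sup>+\<omega>. ennreal ((real n - 2 + 2 * ca) * (Mg n \<omega>)\<^sup>2 + (1 - 2 * ca + ce) * Qg n \<omega>) \<partial>M)"
    by (simp only: rhs)
  finally show ?thesis .
qed


lemma Qg_Suc_int:
  assumes n: "n \<ge> 1"
  shows "(\<integral>\<^sup>+\<omega>. ennreal (Qg (Suc n) \<omega>) \<partial>M) = ennreal (1 / real n) *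
    (\<integral>\<^sup>+\<omega>. ennreal ((real n - 1 + cb) * Qg n \<omega>) \<partial>M)"
proof -
  define y where "y j \<omega> = (bt n \<omega> ! j) powr \<alpha>" for j \<omega>
  define U :: "nat \<Rightarrow> nat \<Rightarrow> 'a \<Rightarrow> real" where "U r j \<omega> = (if r = 0 then max 0 (Qg n \<omega> - (y j \<omega>)\<^sup>2)
      else (y j \<omega>)\<^sup>2)" for r j \<omega>
  define W :: "nat \<Rightarrow> real \<times> real \<Rightarrow> real" where
    "W r x = (if r = 0 then 1 else Yf x)" for r x
  have y0: "y j \<omega> \<ge> 0" for j \<omega> by (simp add: y_def)
  have Q: "Qg n \<omega> = (\<Sum>j<n. (y j \<omega>)\<^sup>2)" for \<omega> by (simp add: Qg_sum y_def)
  have yQ: "(y j \<omega>)\<^sup>2 \<le> Qg n \<omega>" if "j < n" for j \<omega>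
    unfolding Q using that by (intro le_sum_pick) auto
  have pw: "Qg (Suc n) \<omega> = (\<Sum>j<n. \<Sum>r\<in>{0,1}. U r j \<omega> * (if Ig n \<omega> = Suc j then 1 else 0) * W r (LRg n \<omega>))" for \<omega>
  proof -
    let ?k = "Ig n \<omega>"
    have k: "?k \<in> {1..n}" using good_g[of \<omega>] n unfolding good_def by auto
    have step: "Qg (Suc n) \<omega> = Qg n \<omega> - (y (?k - 1) \<omega>)\<^sup>2 + Yf (LRg n \<omega>) * (y (?k - 1) \<omega>)\<^sup>2"
      using M_step(2)[OF good_g n alpha_pos, of \<omega>] by (simp add: Qg_def y_def bt_def Yf_def)
    define G where "G j = (Qg n \<omega> - (y j \<omega>)\<^sup>2) + (y j \<omega>)\<^sup>2 * Yf (LRg n \<omega>)" for j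
    have "Qg (Suc n) \<omega> = G (?k - 1)" unfolding step G_def by (simp add: algebra_simps)
    also have "\<dots> = (\<Sum>j<n. if ?k = Suc j then G j else 0)" by (rule pick_sum[OF k])
    also have "\<dots> = (\<Sum>j<n. \<Sum>r\<in>{0,1}. U r j \<omega> * (if ?k = Suc j then 1 else 0) * W r (LRg n \<omega>))"
    proof (intro sum.cong refl)
      fix j assume j: "j \<in> {..<n}"
      then have "(y j \<omega>)\<^sup>2 \<le> Qg n \<omega>" using yQ by auto
      then show "(if ?k = Suc j then G j else 0) = (\<Sum>r\<in>{0,1}. U r j \<omega> * (if ?k = Suc j then 1 else 0) * W r (LRg n \<omega>))"
        by (simp add: U_def W_def G_def max_def)
    qed
    finally show ?thesis .
  qed
  interpret D: prob_space D by (rule D_prob)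
  have WI: "(\<integral>x. W 0 x \<partial>D) = 1" "(\<integral>x. W 1 x \<partial>D) = cb"
    by (simp_all add: W_def cb_def D.prob_space)
  have rhs: "(\<Sum>j<n. \<Sum>r\<in>{0,1}. (\<integral>x. W r x \<partial>D) * U r j \<omega>) = (real n - 1 + cb) * Qg n \<omega>" for \<omega>
  proof -
    have "(\<Sum>j<n. \<Sum>r\<in>{0,1}. (\<integral>x. W r x \<partial>D) * U r j \<omega>) = (\<Sum>j<n. Qg n \<omega> + (cb - 1) * (y j \<omega>)\<^sup>2)"
    proof (intro sum.cong refl)
      fix j assume j: "j \<in> {..<n}"
      then have "(y j \<omega>)\<^sup>2 \<le> Qg n \<omega>" using yQ by auto
      then show "(\<Sum>r\<in>{0,1}. (\<integral>x. W r x \<partial>D) * U r j \<omega>) = Qg n \<omega> + (cb - 1) * (y j \<omega>)\<^sup>2"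
        using WI by (simp add: U_def max_def algebra_simps)
    qed
    also have "\<dots> = real n * Qg n \<omega> + (cb - 1) * Qg n \<omega>"
      by (simp add: sum.distrib Q flip: sum_distrib_left)
    finally show ?thesis by (simp add: algebra_simps)
  qed
  have ym[measurable]: "(\<lambda>\<omega>. y j \<omega>) \<in> borel_measurable (Sig (past n))" for j
    unfolding y_def by (rule y_meas)
  have Qgm[measurable]: "Qg n \<in> borel_measurable (Sig (past n))" by (rule Qg_meas)
  have "(\<integral>\<^sup>+\<omega>. ennreal (Qg (Suc n) \<omega>) \<partial>M)
      = (\<integral>\<^sup>+\<omega>. ennreal (\<Sum>j<n. \<Sum>r\<in>{0,1}. U r j \<omega> * (if Ig n \<omega> = Suc j then 1 else 0) * W r (LRg n \<omega>)) \<partial>M)"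
    by (simp only: pw)
  also have "\<dots> = ennreal (1 / real n) * (\<integral>\<^sup>+\<omega>. ennreal (\<Sum>j<n. \<Sum>r\<in>{0,1}. (\<integral>x. W r x \<partial>D) * U r j \<omega>) \<partial>M)"
  proof (rule step_expect[OF n])
    show "finite {0, 1::nat}" by simp
    show "\<And>r j \<omega>. U r j \<omega> \<ge> 0" using y0 by (simp add: U_def)
    show "\<And>r j. r \<in> {0, 1} \<Longrightarrow> j < n \<Longrightarrow> U r j \<in> borel_measurable (Sig (past n))"
      unfolding U_def[abs_def] by auto
    show "\<And>r x. W r x \<ge> 0" using Yf_nonneg by (simp add: W_def)
    show "\<And>r. r \<in> {0, 1} \<Longrightarrow> W r \<in> borel_measurable borel"
      unfolding W_def[abs_def] by auto
    show "\<And>r. r \<in> {0, 1} \<Longrightarrow> integrable D (W r)"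
      unfolding W_def[abs_def] using Yf_int by auto
  qed
  also have "\<dots> = ennreal (1 / real n) * (\<integral>\<^sup>+\<omega>. ennreal ((real n - 1 + cb) * Qg n \<omega>) \<partial>M)"
    by (simp only: rhs)
  finally show ?thesis .
qed


lemma Qg_nonneg: "Qg n \<omega> \<ge> 0" unfolding Qg_sum by (simp add: sum_nonneg)

lemma Qg_M: "Qg n \<in> borel_measurable M" by (rule Sig_meas[OF past_idx Qg_meas])
lemma Mg_M: "Mg n \<in> borel_measurable M" by (rule Sig_meas[OF past_idx Mg_meas])

lemma bt1: "bt (Suc 0) \<omega> = [1]" by (simp add: bt_def)

lemma Qg1: "Qg (Suc 0) \<omega> = 1" by (simp add: Qg_def bt1)
lemma Mg1: "Mg (Suc 0) \<omega> = 1" by (simp add: Mg_def Mn_def)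

lemma Qg_int: "n \<ge> 1 \<Longrightarrow> (\<integral>\<^sup>+\<omega>. ennreal (Qg n \<omega>) \<partial>M) = ennreal (Pg (cb - 1) n)"
proof (induction n rule: dec_induct)
  case base then show ?case by (simp add: Qg1 emeasure_space_1)
next
  case (step n)
  have c: "real n - 1 + cb \<ge> 0" using step(1) cb_nonneg by simp
  have "(\<integral>\<^sup>+\<omega>. ennreal (Qg (Suc n) \<omega>) \<partial>M) = ennreal (1 / real n) *
    (\<integral>\<^sup>+\<omega>. ennreal (real n - 1 + cb) * ennreal (Qg n \<omega>) \<partial>M)"
    using Qg_Suc_int[OF step(1)] c Qg_nonneg by (simp add: ennreal_mult)
  also have "\<dots> = ennreal (1 / real n) * (ennreal (real n - 1 + cb) * ennreal (Pg (cb - 1) n))"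
    using Qg_M by (simp add: nn_integral_cmult step(3))
  also have "\<dots> = ennreal (Pg (cb - 1) (Suc n))"
  proof -
    have Pn: "Pg (cb - 1) n \<ge> 0" using Pg_nonneg_mono[of "cb - 1" "cb - 1" n] cb_nonneg step(1) by simp
    have eq: "Pg (cb - 1) (Suc n) = (1 / real n) * ((real n - 1 + cb) * Pg (cb - 1) n)"
      using step(1) by (simp add: Pg_Suc field_simps)
    have i0: "0 \<le> 1 / real n" by simp
    have X0: "0 \<le> (real n - 1 + cb) * Pg (cb - 1) n" using c Pn by simp
    show ?thesis unfolding eq ennreal_mult[OF i0 X0] ennreal_mult[OF c Pn] ..
  qed
  finally show ?case .
qed

abbreviation "s1c \<equiv> 2 * (ca - 1)"
abbreviation "dc \<equiv> 1 - 2 * ca + ce"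

lemma Mg_int: "n \<ge> 1 \<Longrightarrow> (\<integral>\<^sup>+\<omega>. ennreal ((Mg n \<omega>)\<^sup>2) \<partial>M) = ennreal (Aseq s1c dc (cb - 1) n)"
proof (induction n rule: dec_induct)
  case base then show ?case by (simp add: Mg1 emeasure_space_1)
next
  case (step n)
  show ?case
  proof (cases "n = 1")
    case True
    have "(\<integral>\<^sup>+\<omega>. ennreal ((Mg (Suc n) \<omega>)\<^sup>2) \<partial>M) = ennreal (1 / real n) *
      (\<integral>\<^sup>+\<omega>. ennreal ((real n - 2 + 2 * ca) * 1 + (1 - 2 * ca + ce) * 1) \<partial>M)"
      using Mg_Suc_int[OF step(1)] True by (simp add: Mg1 Qg1)
    also have "\<dots> = ennreal (Aseq s1c dc (cb - 1) (Suc n))"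
      using True by (simp add: emeasure_space_1 numeral_2_eq_2 algebra_simps)
    finally show ?thesis .
  next
    case False
    then have n2: "n \<ge> 2" using step(1) by simp
    have c: "real n - 2 + 2 * ca \<ge> 0" using n2 ca_nonneg by simp
    have dn: "dc \<ge> 0" using d_nonneg by simp
    have An: "Aseq s1c dc (cb - 1) n \<ge> 0"
      by (rule Aseq_nonneg) (use ca_nonneg cb_nonneg d_nonneg ce_nonneg in auto)
    have Pn: "Pg (cb - 1) n \<ge> 0" using Pg_nonneg_mono[of "cb - 1" "cb - 1" n] cb_nonneg step(1) by simp
    have "(\<integral>\<^sup>+\<omega>. ennreal ((Mg (Suc n) \<omega>)\<^sup>2) \<partial>M) = ennreal (1 / real n) *
      (\<integral>\<^sup>+\<omega>. ennreal (real n - 2 + 2 * ca) * ennreal ((Mg n \<omega>)\<^sup>2) + ennreal dc * ennreal (Qg n \<omega>) \<partial>M)"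
      using Mg_Suc_int[OF step(1)] c dn Qg_nonneg by (simp add: ennreal_mult ennreal_plus)
    also have "\<dots> = ennreal (1 / real n) * (ennreal (real n - 2 + 2 * ca) * ennreal (Aseq s1c dc (cb - 1) n)
        + ennreal dc * ennreal (Pg (cb - 1) n))"
      using Qg_M Mg_M step(3) Qg_int[OF step(1)] by (simp add: nn_integral_add nn_integral_cmult)
    also have "\<dots> = ennreal (Aseq s1c dc (cb - 1) (Suc n))"
    proof -
      obtain m where m: "n = Suc m" using step(1) by (cases n) auto
      have "Aseq s1c dc (cb - 1) (Suc n) = (1 + s1c / real n) * Aseq s1c dc (cb - 1) n + dc * Pg (cb - 1) n / real n"
        unfolding m by simp
      also have "\<dots> = (1 / real n) * ((real n - 2 + 2 * ca) * Aseq s1c dc (cb - 1) n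
        + dc * Pg (cb - 1) n)"
        using n2 by (simp add: field_simps)
      finally have eq: "Aseq s1c dc (cb - 1) (Suc n) = (1 / real n) * ((real n - 2 + 2 * ca) * Aseq s1c dc (cb - 1) n
        + dc * Pg (cb - 1) n)" .
      have X1: "0 \<le> (real n - 2 + 2 * ca) * Aseq s1c dc (cb - 1) n" and X2: "0 \<le> dc * Pg (cb - 1) n"
        using c An dn Pn by simp_all
      have i0: "0 \<le> 1 / real n" by simp
      have X3: "0 \<le> (real n - 2 + 2 * ca) * Aseq s1c dc (cb - 1) n + dc * Pg (cb - 1) n" using X1 X2 by simp
      show ?thesis unfolding eq ennreal_mult[OF i0 X3] ennreal_plus[OF X1 X2] ennreal_mult[OF c An] ennreal_mult[OF dn Pn] ..
    qed
    finally show ?thesis .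
  qed
qed


lemma F_sum: "(\<integral>\<^sup>+\<omega>. ennreal ((Mn \<alpha> (\<lambda>k. LR k \<omega>) (\<lambda>k. I k \<omega>) (V \<omega>))\<^sup>2) \<partial>M)
   = (\<Sum>n. (\<integral>\<^sup>+\<omega>. ennreal ((Mg n \<omega>)\<^sup>2) \<partial>M) * ennreal (measure M {\<omega> \<in> space M. V \<omega> = n}))"
proof -
  have "(\<integral>\<^sup>+\<omega>. ennreal ((Mn \<alpha> (\<lambda>k. LR k \<omega>) (\<lambda>k. I k \<omega>) (V \<omega>))\<^sup>2) \<partial>M)
      = (\<integral>\<^sup>+\<omega>. ennreal ((Mg (V \<omega>) \<omega>)\<^sup>2) \<partial>M)"
    using AE_Mg by (intro nn_integral_cong_AE) (auto elim!: eventually_mono)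
  also have "\<dots> = (\<integral>\<^sup>+\<omega>. (\<Sum>n. ennreal ((Mg n \<omega>)\<^sup>2) * ennreal (if V \<omega> = n then 1 else 0)) \<partial>M)"
  proof (intro nn_integral_cong)
    fix \<omega>
    have "(\<lambda>n. if n = V \<omega> then ennreal ((Mg n \<omega>)\<^sup>2) else 0) sums ennreal ((Mg (V \<omega>) \<omega>)\<^sup>2)"
      by (rule sums_single)
    moreover have "(\<lambda>n. ennreal ((Mg n \<omega>)\<^sup>2) * ennreal (if V \<omega> = n then 1 else 0)) = (\<lambda>n. if n = V \<omega> then ennreal ((Mg n \<omega>)\<^sup>2) else 0)"
      by auto
    ultimately show "ennreal ((Mg (V \<omega>) \<omega>)\<^sup>2) = (\<Sum>n. ennreal ((Mg n \<omega>)\<^sup>2) * ennreal (if V \<omega> = n then 1 else 0))"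
      by (simp add: sums_iff)
  qed
  also have "\<dots> = (\<Sum>n. (\<integral>\<^sup>+\<omega>. ennreal ((Mg n \<omega>)\<^sup>2) * ennreal (if V \<omega> = n then 1 else 0) \<partial>M))"
  proof (rule nn_integral_suminf)
    fix n
    have [measurable]: "Mg n \<in> borel_measurable M" by (rule Mg_M)
    have [measurable]: "V \<in> measurable M (count_space UNIV)" by (rule V_rv)
    show "(\<lambda>\<omega>. ennreal ((Mg n \<omega>)\<^sup>2) * ennreal (if V \<omega> = n then 1 else 0)) \<in> borel_measurable M"
      by measurable
  qed
  also have "\<dots> = (\<Sum>n. (\<integral>\<^sup>+\<omega>. ennreal ((Mg n \<omega>)\<^sup>2) \<partial>M) * ennreal (measure M {\<omega> \<in> space M. V \<omega> = n}))"
  proof (intro suminf_cong)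
    fix n
    have Um: "(\<lambda>\<omega>. ennreal ((Mg n \<omega>)\<^sup>2)) \<in> borel_measurable (Sig (past n))"
      using Mg_meas[measurable] by measurable
    have [measurable]: "V \<in> measurable (Sig {Inr (Inr ())}) (count_space UNIV)" by (rule V_Sig) simp
    have Vm: "(\<lambda>\<omega>. ennreal (if V \<omega> = n then 1 else 0)) \<in> borel_measurable (Sig {Inr (Inr ())})"
      by measurable
    have S: "{\<omega> \<in> space M. V \<omega> = n} \<in> sets M"
      using V_rv by (simp add: pred_def[symmetric])
    have "(\<integral>\<^sup>+\<omega>. ennreal (if V \<omega> = n then 1 else 0) \<partial>M) = (\<integral>\<^sup>+\<omega>. indicator {\<omega> \<in> space M. V \<omega> = n} \<omega> \<partial>M)"
      by (intro nn_integral_cong) (auto simp: indicator_def)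
    also have "\<dots> = ennreal (measure M {\<omega> \<in> space M. V \<omega> = n})"
      using S by (simp add: emeasure_eq_measure)
    finally show "(\<integral>\<^sup>+\<omega>. ennreal ((Mg n \<omega>)\<^sup>2) * ennreal (if V \<omega> = n then 1 else 0) \<partial>M)
      = (\<integral>\<^sup>+\<omega>. ennreal ((Mg n \<omega>)\<^sup>2) \<partial>M) * ennreal (measure M {\<omega> \<in> space M. V \<omega> = n})"
      using indep2_blocks[OF Um Vm] by simp
  qed
  finally show ?thesis .
qed


lemma Mg0: "Mg 0 \<omega> = 0" by (simp add: Mg_def Mn_def)

lemma A_nonneg: "Aseq s1c dc (cb - 1) n \<ge> 0"
  by (rule Aseq_nonneg) (use ca_nonneg cb_nonneg d_nonneg ce_nonneg in auto)

lemma F_final: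
  assumes t0: "t \<ge> 0" and V_law: "\<And>n. n \<ge> 1 \<Longrightarrow> measure M {\<omega> \<in> space M. V \<omega> = n} = exp (- t) * (1 - exp (- t)) ^ (n - 1)"
  shows "(\<integral>\<^sup>+\<omega>. ennreal ((Mn \<alpha> (\<lambda>k. LR k \<omega>) (\<lambda>k. I k \<omega>) (V \<omega>))\<^sup>2) \<partial>M)
   = (\<Sum>m. ennreal (exp (- t) * (1 - exp (- t)) ^ m * Aseq s1c dc (cb - 1) (Suc m)))"
proof -
  define f where "f n = (\<integral>\<^sup>+\<omega>. ennreal ((Mg n \<omega>)\<^sup>2) \<partial>M) * ennreal (measure M {\<omega> \<in> space M. V \<omega> = n})" for n
  have "suminf f = (\<Sum>j. f (j + 1)) + (\<Sum>j<1. f j)" by (rule suminf_offset) (rule summableI)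
  also have "(\<Sum>j<1. f j) = 0" by (simp add: f_def Mg0)
  also have "(\<lambda>j. f (j + 1)) = (\<lambda>m. ennreal (exp (- t) * (1 - exp (- t)) ^ m * Aseq s1c dc (cb - 1) (Suc m)))"
  proof
    fix m
    have "f (m + 1) = ennreal (Aseq s1c dc (cb - 1) (Suc m)) * ennreal (exp (- t) * (1 - exp (- t)) ^ m)"
      unfolding f_def using Mg_int[of "Suc m"] V_law[of "Suc m"] by simp
    also have "\<dots> = ennreal (exp (- t) * (1 - exp (- t)) ^ m * Aseq s1c dc (cb - 1) (Suc m))"
    proof -
      have p0: "0 \<le> exp (- t) * (1 - exp (- t)) ^ m" using t0 by simp
      show ?thesis using ennreal_mult[OF p0 A_nonneg, of "Suc m"] by (simp add: mult_ac)
    qed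
    finally show "f (m + 1) = ennreal (exp (- t) * (1 - exp (- t)) ^ m * Aseq s1c dc (cb - 1) (Suc m))" .
  qed
  finally show ?thesis using F_sum unfolding f_def by simp
qed


lemma F_explicit:
  assumes t0: "t \<ge> 0" and V_law: "\<And>n. n \<ge> 1 \<Longrightarrow> measure M {\<omega> \<in> space M. V \<omega> = n} = exp (- t) * (1 - exp (- t)) ^ (n - 1)"
  shows "(\<integral>\<^sup>+\<omega>. ennreal ((Mn \<alpha> (\<lambda>k. LR k \<omega>) (\<lambda>k. I k \<omega>) (V \<omega>))\<^sup>2) \<partial>M)
   = (\<Sum>m. ennreal (exp (- t) * (1 - exp (- t)) ^ m * Aseq (2 * S_fun D \<alpha>)
        (1 - 2 * (S_fun D \<alpha> + 1) + (\<integral>x. (fst x powr \<alpha> + snd x powr \<alpha>)\<^sup>2 \<partial>D)) (S_fun D (2 * \<alpha>)) (Suc m)))"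
proof -
  have e1: "s1c = 2 * S_fun D \<alpha>" using ca_S by simp
  have e2: "dc = 1 - 2 * (S_fun D \<alpha> + 1) + (\<integral>x. (fst x powr \<alpha> + snd x powr \<alpha>)\<^sup>2 \<partial>D)"
    using ca_S by (simp add: ce_def Xf_def)
  have e3: "cb - 1 = S_fun D (2 * \<alpha>)" using cb_S by simp
  show ?thesis using F_final[OF t0 V_law] unfolding e1 e2 e3 .
qed

lemma consts_explicit:
  "1 - 2 * (S_fun D \<alpha> + 1) + (\<integral>x. (fst x powr \<alpha> + snd x powr \<alpha>)\<^sup>2 \<partial>D) \<ge> 0"
  "S_fun D (2 * \<alpha>) \<ge> -1" "S_fun D \<alpha> \<ge> -1"
  "1 + 2 * S_fun D \<alpha> + (1 - 2 * (S_fun D \<alpha> + 1) + (\<integral>x. (fst x powr \<alpha> + snd x powr \<alpha>)\<^sup>2 \<partial>D)) \<ge> 0"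
proof -
  have e: "(\<integral>x. (fst x powr \<alpha> + snd x powr \<alpha>)\<^sup>2 \<partial>D) = ce" by (simp add: ce_def Xf_def)
  show "1 - 2 * (S_fun D \<alpha> + 1) + (\<integral>x. (fst x powr \<alpha> + snd x powr \<alpha>)\<^sup>2 \<partial>D) \<ge> 0"
    using d_nonneg ca_S e by simp
  show "S_fun D (2 * \<alpha>) \<ge> -1" using cb_S cb_nonneg by simp
  show "S_fun D \<alpha> \<ge> -1" using ca_S ca_nonneg by simp
  show "1 + 2 * S_fun D \<alpha> + (1 - 2 * (S_fun D \<alpha> + 1) + (\<integral>x. (fst x powr \<alpha> + snd x powr \<alpha>)\<^sup>2 \<partial>D)) \<ge> 0"
    using ce_nonneg e by simp
qed

end




theorem lemma5p5:
  fixes M :: "'a measure"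
    and D :: "(real \<times> real) measure"
    and LR :: "nat \<Rightarrow> 'a \<Rightarrow> real \<times> real"
    and I :: "nat \<Rightarrow> 'a \<Rightarrow> nat"
    and nu :: "real \<Rightarrow> 'a \<Rightarrow> nat"
    and \<alpha> :: real
  assumes M: "prob_space M"
    and D_nonneg: "AE x in D. fst x \<ge> 0 \<and> snd x \<ge> 0"
    and D_pos: "measure D {x. fst x > 0} + measure D {x. snd x > 0} > 1"
    and LR_rv: "\<And>n. n \<ge> 1 \<Longrightarrow> LR n \<in> borel_measurable M"
    and LR_law: "\<And>n. n \<ge> 1 \<Longrightarrow> distr M borel (LR n) = D"
    and I_rv: "\<And>n. n \<ge> 1 \<Longrightarrow> I n \<in> measurable M (count_space UNIV)"
    and I_law: "\<And>n k. n \<ge> 1 \<Longrightarrow>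
       measure M {\<omega> \<in> space M. I n \<omega> = k} = (if k \<in> {1..n} then 1 / real n else 0)"
    and nu_rv: "\<And>t. t \<ge> 0 \<Longrightarrow> nu t \<in> measurable M (count_space UNIV)"
    and nu_law: "\<And>t n. t \<ge> 0 \<Longrightarrow> n \<ge> 1 \<Longrightarrow>
       measure M {\<omega> \<in> space M. nu t \<omega> = n} = exp (- t) * (1 - exp (- t)) ^ (n - 1)"
    and indep: "\<And>t. t \<ge> 0 \<Longrightarrow> prob_space.indep_sets M
       (case_sum (\<lambda>n. rv_events M borel (LR n))
          (case_sum (\<lambda>n. rv_events M (count_space UNIV) (I n))
                    (\<lambda>_. rv_events M (count_space UNIV) (nu t)))) idx"
    and alpha_pos: "\<alpha> > 0"
    and moment: "integrable D (\<lambda>x. fst x powr (2 * \<alpha>) + snd x powr (2 * \<alpha>))"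
  shows "\<forall>\<eta>>0. \<exists>C>0. \<forall>t\<ge>1.
    ennreal (exp (- 2 * S_fun D \<alpha> * t)) *
      (\<integral>\<^sup>+ \<omega>. ennreal ((Mn \<alpha> (\<lambda>k. LR k \<omega>) (\<lambda>k. I k \<omega>) (nu t \<omega>))\<^sup>2) \<partial>M)
    \<le> ennreal (htilde_fun C \<alpha> (S_fun D \<alpha>) (mu_fun D \<alpha>) (mu_fun D (2 * \<alpha>)) \<eta> t)"
proof (intro allI impI)
  fix \<eta> :: real assume eta: "\<eta> > 0"
  interpret P: prob_space M by (rule M)
  have Yt: "yset M D LR I (nu t) \<alpha>" if "t \<ge> 0" for t
    by (intro yset.intro[OF M] yset_axioms.intro) (use assms that in auto)
  define S1 where "S1 = S_fun D \<alpha>"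
  define S2 where "S2 = S_fun D (2 * \<alpha>)"
  define dd where "dd = 1 - 2 * (S_fun D \<alpha> + 1) + (\<integral>x. (fst x powr \<alpha> + snd x powr \<alpha>)\<^sup>2 \<partial>D)"
  define A where "A = Aseq (2 * S1) dd S2"
  have cst: "dd \<ge> 0" "S2 \<ge> -1" "S1 \<ge> -1" "1 + 2 * S1 + dd \<ge> 0"
    using yset.consts_explicit[OF Yt[of 1]] unfolding S1_def S2_def dd_def by auto
  have A1: "A (Suc 0) = 1" by (simp add: A_def)
  have AS: "\<And>n. n \<ge> 1 \<Longrightarrow> A (Suc n) = (1 + 2 * S1 / real n) * A n + dd * Pg S2 n / real n"
  proof -
    fix n :: nat assume "n \<ge> 1"
    then obtain m where "n = Suc m" by (cases n) auto
    then show "A (Suc n) = (1 + 2 * S1 / real n) * A n + dd * Pg S2 n / real n" by (simp add: A_def)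
  qed
  have A0: "\<And>n. A n \<ge> 0" unfolding A_def by (rule Aseq_nonneg) (use cst in auto)
  have s1: "2 * S1 \<ge> -2" using cst by simp
  have key: "ennreal (exp (- 2 * S_fun D \<alpha> * t)) *
      (\<integral>\<^sup>+ \<omega>. ennreal ((Mn \<alpha> (\<lambda>k. LR k \<omega>) (\<lambda>k. I k \<omega>) (nu t \<omega>))\<^sup>2) \<partial>M)
    = ennreal (exp (- (2 * S1) * t) * (\<Sum>m. exp (- t) * (1 - exp (- t)) ^ m * A (Suc m)))" if t: "t \<ge> 1" for t
  proof -
    have t0: "t \<ge> 0" "t > 0" using t by auto
    have F: "(\<integral>\<^sup>+ \<omega>. ennreal ((Mn \<alpha> (\<lambda>k. LR k \<omega>) (\<lambda>k. I k \<omega>) (nu t \<omega>))\<^sup>2) \<partial>M)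
      = (\<Sum>m. ennreal (exp (- t) * (1 - exp (- t)) ^ m * A (Suc m)))"
      using yset.F_explicit[OF Yt[OF t0(1)] t0(1) nu_law[OF t0(1)]] unfolding A_def S1_def S2_def dd_def by simp
    have nn: "\<And>m. 0 \<le> exp (- t) * (1 - exp (- t)) ^ m * A (Suc m)" using A0 t0 by simp
    have su: "summable (\<lambda>m. exp (- t) * (1 - exp (- t)) ^ m * A (Suc m))"
      by (rule main_bound(1)[OF s1 cst(2) cst(1) A1 AS A0 _ _ t0(2), of "max S2 (2 * S1) + 1"]) auto
    have "(\<Sum>m. ennreal (exp (- t) * (1 - exp (- t)) ^ m * A (Suc m))) = ennreal (\<Sum>m. exp (- t) * (1 - exp (- t)) ^ m * A (Suc m))"
      by (rule suminf_ennreal2[OF nn su])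
    moreover have "0 \<le> (\<Sum>m. exp (- t) * (1 - exp (- t)) ^ m * A (Suc m))"
      by (rule suminf_nonneg[OF su nn])
    ultimately show ?thesis unfolding F S1_def by (simp add: ennreal_mult[symmetric])
  qed
  have bd: "exp (- (2 * S1) * t) * (\<Sum>m. exp (- t) * (1 - exp (- t)) ^ m * A (Suc m))
      \<le> 1 + dd * (exp ((s2 - 2 * S1) * t) - 1) / (s2 - 2 * S1)"
    if t: "t \<ge> 1" and s2: "s2 \<ge> S2" "s2 \<noteq> 2 * S1" for t s2
    using main_bound(2)[OF s1 cst(2) cst(1) A1 AS A0 s2, of t] t by simp
  have mu1: "mu_fun D \<alpha> = S1 / \<alpha>" and mu2: "mu_fun D (2 * \<alpha>) = S2 / (2 * \<alpha>)"
    by (simp_all add: mu_fun_def S1_def S2_def)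
  have ml: "mu_fun D (2 * \<alpha>) < mu_fun D \<alpha> \<longleftrightarrow> S2 < 2 * S1"
    using alpha_pos unfolding mu1 mu2 by (simp add: field_simps)
  have mg: "mu_fun D (2 * \<alpha>) > mu_fun D \<alpha> \<longleftrightarrow> S2 > 2 * S1"
    using alpha_pos unfolding mu1 mu2 by (simp add: field_simps)
  have me: "mu_fun D (2 * \<alpha>) = mu_fun D \<alpha> \<longleftrightarrow> S2 = 2 * S1"
    using alpha_pos unfolding mu1 mu2 by (simp add: field_simps)
  have mdiff: "2 * \<alpha> * (mu_fun D (2 * \<alpha>) - mu_fun D \<alpha>) = S2 - 2 * S1"
    using alpha_pos unfolding mu1 mu2 by (simp add: field_simps)
  have S1e: "S_fun D \<alpha> = S1" by (simp add: S1_def)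
  have main: "\<exists>C>0. \<forall>t\<ge>1. exp (- (2 * S1) * t) * (\<Sum>m. exp (- t) * (1 - exp (- t)) ^ m * A (Suc m))
      \<le> htilde_fun C \<alpha> S1 (mu_fun D \<alpha>) (mu_fun D (2 * \<alpha>)) \<eta> t"
  proof (cases "S2 < 2 * S1")
    case True
    define C where "C = 1 + dd / (2 * S1 - S2)"
    have "dd / (2 * S1 - S2) \<ge> 0" using True cst by simp
    then have C: "C > 0" by (simp add: C_def)
    show ?thesis
    proof (intro exI[of _ C] conjI allI impI C)
      fix t :: real assume t: "t \<ge> 1"
      have "exp (- (2 * S1) * t) * (\<Sum>m. exp (- t) * (1 - exp (- t)) ^ m * A (Suc m))
          \<le> 1 + dd * (exp ((S2 - 2 * S1) * t) - 1) / (S2 - 2 * S1)"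
        using bd[OF t order_refl] True by simp
      also have "\<dots> \<le> C"
      proof -
        have "dd * (exp ((S2 - 2 * S1) * t) - 1) / (S2 - 2 * S1) = dd * (1 - exp ((S2 - 2 * S1) * t)) / (2 * S1 - S2)"
        proof -
          have "S2 - 2 * S1 = - (2 * S1 - S2)" by simp
          then show ?thesis by (simp only: divide_minus_right) (simp add: algebra_simps minus_divide_left)
        qed
        also have "\<dots> \<le> dd * 1 / (2 * S1 - S2)"
          using True cst by (intro divide_right_mono mult_left_mono) auto
        finally show ?thesis by (simp add: C_def)
      qed
      also have "\<dots> \<le> htilde_fun C \<alpha> S1 (mu_fun D \<alpha>) (mu_fun D (2 * \<alpha>)) \<eta> t"
      proof -
        have "C \<le> C * t" using C t by simp
        moreover have "C \<le> C * exp (- (2 * S1 + 1) * t)" if "2 * S1 < -1"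
        proof -
          have "1 \<le> exp (- (2 * S1 + 1) * t)" using that t by (simp add: one_le_exp_iff mult_nonpos_nonneg)
          then show ?thesis using C by simp
        qed
        ultimately show ?thesis using True ml unfolding htilde_fun_def h_fun_def by auto
      qed
      finally show "exp (- (2 * S1) * t) * (\<Sum>m. exp (- t) * (1 - exp (- t)) ^ m * A (Suc m))
        \<le> htilde_fun C \<alpha> S1 (mu_fun D \<alpha>) (mu_fun D (2 * \<alpha>)) \<eta> t" .
    qed
  next
    case False
    show ?thesis
    proof (cases "S2 > 2 * S1")
      case True
      define \<delta> where "\<delta> = S2 - 2 * S1"
      have dp: "\<delta> > 0" using True by (simp add: \<delta>_def)
      define C where "C = 1 + dd / \<delta>"
      have "dd / \<delta> \<ge> 0" using dp cst by simp
      then have C: "C > 0" by (simp add: C_def)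
      show ?thesis
      proof (intro exI[of _ C] conjI allI impI C)
        fix t :: real assume t: "t \<ge> 1"
        have "exp (- (2 * S1) * t) * (\<Sum>m. exp (- t) * (1 - exp (- t)) ^ m * A (Suc m))
            \<le> 1 + dd * (exp (\<delta> * t) - 1) / \<delta>"
          using bd[OF t order_refl] True by (simp add: \<delta>_def)
        also have "\<dots> \<le> C * exp (\<delta> * t)"
        proof -
          have e1: "1 \<le> exp (\<delta> * t)" using dp t by simp
          have q: "dd * (exp (\<delta> * t) - 1) / \<delta> \<le> dd * exp (\<delta> * t) / \<delta>"
            using dp cst by (intro divide_right_mono mult_left_mono) auto
          have "C * exp (\<delta> * t) = exp (\<delta> * t) + dd * exp (\<delta> * t) / \<delta>" by (simp add: C_def algebra_simps)
          then show ?thesis using e1 q by linarith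
        qed
        also have "\<dots> = htilde_fun C \<alpha> S1 (mu_fun D \<alpha>) (mu_fun D (2 * \<alpha>)) \<eta> t"
          using True mg ml mdiff unfolding htilde_fun_def h_fun_def \<delta>_def by auto
        finally show "exp (- (2 * S1) * t) * (\<Sum>m. exp (- t) * (1 - exp (- t)) ^ m * A (Suc m))
          \<le> htilde_fun C \<alpha> S1 (mu_fun D \<alpha>) (mu_fun D (2 * \<alpha>)) \<eta> t" .
      qed
    next
      case False2: False
      then have eq: "S2 = 2 * S1" using False by simp
      define C where "C = (1 + 2 * dd) * (1 + 1 / \<eta>)"
      have C: "C > 0" using cst eta by (simp add: C_def add_pos_nonneg)
      show ?thesis
      proof (intro exI[of _ C] conjI allI impI C)
        fix t :: real assume t: "t \<ge> 1"
        have s2: "S2 + 1 / t \<ge> S2" "S2 + 1 / t \<noteq> 2 * S1" using t eq by auto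
        have "exp (- (2 * S1) * t) * (\<Sum>m. exp (- t) * (1 - exp (- t)) ^ m * A (Suc m))
            \<le> 1 + dd * (exp ((S2 + 1 / t - 2 * S1) * t) - 1) / (S2 + 1 / t - 2 * S1)"
          by (rule bd[OF t s2])
        also have "\<dots> = 1 + dd * (exp 1 - 1) * t" using eq t by simp
        also have "\<dots> \<le> (1 + 2 * dd) * t"
        proof -
          have "exp (1::real) \<le> 3" by (rule exp_le)
          then have "dd * (exp 1 - 1) * t \<le> dd * 2 * t" using cst t by (intro mult_right_mono mult_left_mono) auto
          then show ?thesis using t by (simp add: algebra_simps)
        qed
        also have "\<dots> \<le> htilde_fun C \<alpha> S1 (mu_fun D \<alpha>) (mu_fun D (2 * \<alpha>)) \<eta> t"
        proof -
          have p: "0 \<le> 1 + 2 * dd" using cst by simp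
          have Ct: "(1 + 2 * dd) * t \<le> C * t" using p t eta unfolding C_def
            by (intro mult_right_mono) (auto simp: field_simps)
          have "(1 + 2 * dd) * t \<le> C * exp (\<eta> * t)"
          proof -
            have "\<eta> * t \<le> exp (\<eta> * t)" using exp_ge_add_one_self[of "\<eta> * t"] by linarith
            then have "t \<le> exp (\<eta> * t) / \<eta>" using eta by (simp add: field_simps)
            also have "\<dots> \<le> (1 + 1 / \<eta>) * exp (\<eta> * t)" using eta by (simp add: field_simps)
            finally show ?thesis using p unfolding C_def by (simp add: mult_left_mono mult.assoc)
          qed
          moreover have "C * t \<le> C * (t * exp (- (2 * S1 + 1) * t))" if "2 * S1 < -1"
          proof -
            have "1 \<le> exp (- (2 * S1 + 1) * t)" using that t by (simp add: one_le_exp_iff mult_nonpos_nonneg)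
            then have "t \<le> t * exp (- (2 * S1 + 1) * t)" using t by simp
            then show ?thesis using C by simp
          qed
          moreover have "C * t \<le> C * t\<^sup>2" using C t by (simp add: power2_eq_square)
          ultimately show ?thesis using Ct eq me ml mg unfolding htilde_fun_def h_fun_def by auto
        qed
        finally show "exp (- (2 * S1) * t) * (\<Sum>m. exp (- t) * (1 - exp (- t)) ^ m * A (Suc m))
          \<le> htilde_fun C \<alpha> S1 (mu_fun D \<alpha>) (mu_fun D (2 * \<alpha>)) \<eta> t" .
      qed
    qed
  qed
  then obtain C where C: "C > 0" and CB: "\<And>t. t \<ge> 1 \<Longrightarrow> exp (- (2 * S1) * t) * (\<Sum>m. exp (- t) * (1 - exp (- t)) ^ m * A (Suc m))
      \<le> htilde_fun C \<alpha> S1 (mu_fun D \<alpha>) (mu_fun D (2 * \<alpha>)) \<eta> t" by blast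
  show "\<exists>C>0. \<forall>t\<ge>1. ennreal (exp (- 2 * S_fun D \<alpha> * t)) *
      (\<integral>\<^sup>+ \<omega>. ennreal ((Mn \<alpha> (\<lambda>k. LR k \<omega>) (\<lambda>k. I k \<omega>) (nu t \<omega>))\<^sup>2) \<partial>M)
    \<le> ennreal (htilde_fun C \<alpha> (S_fun D \<alpha>) (mu_fun D \<alpha>) (mu_fun D (2 * \<alpha>)) \<eta> t)"
  proof (intro exI[of _ C] conjI allI impI C)
    fix t :: real assume t: "t \<ge> 1"
    show "ennreal (exp (- 2 * S_fun D \<alpha> * t)) *
      (\<integral>\<^sup>+ \<omega>. ennreal ((Mn \<alpha> (\<lambda>k. LR k \<omega>) (\<lambda>k. I k \<omega>) (nu t \<omega>))\<^sup>2) \<partial>M)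
    \<le> ennreal (htilde_fun C \<alpha> (S_fun D \<alpha>) (mu_fun D \<alpha>) (mu_fun D (2 * \<alpha>)) \<eta> t)"
      using key[OF t] ennreal_leI[OF CB[OF t]] unfolding S1e by simp
  qed
qed


end
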